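(* $\{\omega \cdot 2, \omega^\star \cdot 2\} \leq_c \{\omega^2, (\omega^2)^\star\}$.
   Context: Structures have domains contained in $\omega$. For countable structures $\mathcal{A},\mathcal{B}$, the class $\{\mathcal{A},\mathcal{B}\}$ denotes the class of all structures (with domain $\subseteq\omega$) isomorphic to $\mathcal{A}$ or to $\mathcal{B}$. Linear orders are in the language $\{<\}$; $L^\star$ is the reverse of a linear order $L$; $\omega\cdot 2$, $\omega^2$ are ordinal order types. An enumeration operator $\Gamma$ is a c.e. set of pairs $(\alpha,\varphi)$ with $\alpha$ a finite set of basic (atomic or negated atomic) sentences of the input language with constants from $\omega$ and $\varphi$ a basic sentence of the output language with constants from $\omega$; $\Gamma(X)=\{\varphi : (\alpha,\varphi)\in\Gamma,\ \alpha\subseteq X\}$. $\Gamma$ is a computable embedding of $\mathcal{K}_0$ into $\mathcal{K}_1$ ($\mathcal{K}_0\leq_c\mathcal{K}_1$) if for every $\mathcal{A}\in\mathcal{K}_0$, $\Gamma$ applied to the atomic diagram of $\mathcal{A}$ is the atomic diagram of a structure $\Gamma(\mathcal{A})\in\mathcal{K}_1$, and for all $\mathcal{A},\mathcal{B}\in\mathcal{K}_0$, $\mathcal{A}\cong\mathcal{B}$ iff $\Gamma(\mathcal{A})\cong\Gamma(\mathcal{B})$. *)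

theory Defs
  imports Main "HOL-Library.Nat_Bijection"
begin

datatype recf = Z | S | Id nat | Cn recf "recf list" | Pr recf recf | Mn recf

inductive eval :: "recf \<Rightarrow> nat list \<Rightarrow> nat \<Rightarrow> bool" where
  eval_Z: "eval Z xs 0"
| eval_S: "eval S (x # xs) (Suc x)"
| eval_Id: "i < length xs \<Longrightarrow> eval (Id i) xs (xs ! i)"
| eval_Cn: "length ys = length gs \<Longrightarrow> (\<forall>i < length gs. eval (gs ! i) xs (ys ! i))
            \<Longrightarrow> eval f ys v \<Longrightarrow> eval (Cn f gs) xs v"
| eval_Pr0: "eval f xs v \<Longrightarrow> eval (Pr f g) (0 # xs) v"
| eval_PrS: "eval (Pr f g) (n # xs) u \<Longrightarrow> eval g (n # u # xs) v
            \<Longrightarrow> eval (Pr f g) (Suc n # xs) v"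
| eval_Mn: "eval f (n # xs) 0 \<Longrightarrow> (\<forall>m < n. \<exists>u. eval f (m # xs) u \<and> 0 < u)
            \<Longrightarrow> eval (Mn f) xs n"

definition ce :: "nat set \<Rightarrow> bool" where
  "ce W \<longleftrightarrow> (\<exists>f. W = {n. \<exists>v. eval f [n] v})"

datatype atom = Lt nat nat | Eq nat nat
datatype basic = Pos atom | Neg atom

fun atom_code :: "atom \<Rightarrow> nat" where
  "atom_code (Lt a b) = prod_encode (0, prod_encode (a, b))"
| "atom_code (Eq a b) = prod_encode (1, prod_encode (a, b))"

fun basic_code :: "basic \<Rightarrow> nat" where
  "basic_code (Pos s) = 2 * atom_code s"
| "basic_code (Neg s) = 2 * atom_code s + 1"

definition pair_code :: "basic set \<Rightarrow> basic \<Rightarrow> nat" where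
  "pair_code \<alpha> \<phi> = prod_encode (set_encode (basic_code ` \<alpha>), basic_code \<phi>)"

type_synonym struc = "nat set \<times> (nat \<times> nat) set"

definition is_structure :: "struc \<Rightarrow> bool" where
  "is_structure A \<longleftrightarrow> snd A \<subseteq> fst A \<times> fst A"

definition iso :: "struc \<Rightarrow> struc \<Rightarrow> bool" where
  "iso A B \<longleftrightarrow> (\<exists>f. bij_betw f (fst A) (fst B) \<and>
     (\<forall>x\<in>fst A. \<forall>y\<in>fst A. (x, y) \<in> snd A \<longleftrightarrow> (f x, f y) \<in> snd B))"

fun holds :: "struc \<Rightarrow> basic \<Rightarrow> bool" where
  "holds A (Pos (Lt a b)) \<longleftrightarrow> a \<in> fst A \<and> b \<in> fst A \<and> (a, b) \<in> snd A"
| "holds A (Neg (Lt a b)) \<longleftrightarrow> a \<in> fst A \<and> b \<in> fst A \<and> (a, b) \<notin> snd A"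
| "holds A (Pos (Eq a b)) \<longleftrightarrow> a \<in> fst A \<and> b \<in> fst A \<and> a = b"
| "holds A (Neg (Eq a b)) \<longleftrightarrow> a \<in> fst A \<and> b \<in> fst A \<and> a \<noteq> b"

definition diag :: "struc \<Rightarrow> basic set" where
  "diag A = {\<phi>. holds A \<phi>}"

definition enum_apply :: "nat set \<Rightarrow> basic set \<Rightarrow> basic set" where
  "enum_apply W X = {\<phi>. \<exists>\<alpha>. finite \<alpha> \<and> \<alpha> \<subseteq> X \<and> pair_code \<alpha> \<phi> \<in> W}"

definition computable_embedding :: "nat set \<Rightarrow> struc set \<Rightarrow> struc set \<Rightarrow> bool" where
  "computable_embedding W K0 K1 \<longleftrightarrow> ce W \<and>
     (\<forall>A\<in>K0. \<exists>B\<in>K1. enum_apply W (diag A) = diag B) \<and>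
     (\<forall>A\<in>K0. \<forall>A'\<in>K0. \<forall>B B'. is_structure B \<longrightarrow> is_structure B' \<longrightarrow>
        enum_apply W (diag A) = diag B \<longrightarrow> enum_apply W (diag A') = diag B' \<longrightarrow>
        (iso A A' \<longleftrightarrow> iso B B'))"

definition c_leq :: "struc set \<Rightarrow> struc set \<Rightarrow> bool" (infix "\<le>\<^sub>c" 50) where
  "K0 \<le>\<^sub>c K1 \<longleftrightarrow> (\<exists>W. computable_embedding W K0 K1)"

definition class2 :: "struc \<Rightarrow> struc \<Rightarrow> struc set" where
  "class2 A B = {C. is_structure C \<and> (iso C A \<or> iso C B)}"

text \<open>omega*2: n corresponds to the element (n mod 2, n div 2) ordered lexicographically.\<close>
definition omega_times_2 :: struc where
  "omega_times_2 = (UNIV, {(a, b). a mod 2 < b mod 2 \<or> (a mod 2 = b mod 2 \<and> a div 2 < b div 2)})"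

text \<open>omega^star * 2 = omega^star + omega^star: two copies of the reverse of omega.\<close>
definition omega_star_times_2 :: struc where
  "omega_star_times_2 = (UNIV, {(a, b). a mod 2 < b mod 2 \<or> (a mod 2 = b mod 2 \<and> b div 2 < a div 2)})"

text \<open>omega^2: n corresponds to prod_decode n, ordered lexicographically.\<close>
definition omega_squared :: struc where
  "omega_squared = (UNIV, {(a, b). fst (prod_decode a) < fst (prod_decode b) \<or>
      (fst (prod_decode a) = fst (prod_decode b) \<and> snd (prod_decode a) < snd (prod_decode b))})"

definition rev_order :: "struc \<Rightarrow> struc" where
  "rev_order L = (fst L, (snd L)\<inverse>)"

end

theory Submission
  imports Defs
begin

inductive_cases evZE: "eval Z xs v"
inductive_cases evSE: "eval S xs v"
inductive_cases evIdE: "eval (Id i) xs v"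
inductive_cases evCnE: "eval (Cn f gs) xs v"
inductive_cases evPrE: "eval (Pr f g) xs v"
inductive_cases evMnE: "eval (Mn f) xs v"

lemma eval_det: "eval f xs u \<Longrightarrow> eval f xs v \<Longrightarrow> u = v"
proof (induction arbitrary: v rule: eval.induct)
  case (eval_Z xs)
  then show ?case by (auto elim: evZE)
next
  case (eval_S x xs)
  then show ?case by (auto elim: evSE)
next
  case (eval_Id i xs)
  then show ?case by (auto elim: evIdE)
next
  case (eval_Cn ys gs xs f w)
  from eval_Cn.prems obtain ys' where ys': "length ys' = length gs"
    "\<forall>i<length gs. eval (gs ! i) xs (ys' ! i)" "eval f ys' v"
    by (auto elim: evCnE)
  have "ys' = ys"
    by (rule nth_equalityI) (use ys' eval_Cn.hyps eval_Cn.IH in auto)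
  then show ?case using eval_Cn.IH ys' by auto
next
  case (eval_Pr0 f xs w g)
  from eval_Pr0.prems show ?case by (auto elim: evPrE intro: eval_Pr0.IH)
next
  case (eval_PrS f g n xs u w)
  from eval_PrS.prems obtain u' where "eval (Pr f g) (n # xs) u'" "eval g (n # u' # xs) v"
    by (auto elim: evPrE)
  then show ?case using eval_PrS.IH by auto
next
  case (eval_Mn f n xs)
  from eval_Mn.prems have v0: "eval f (v # xs) 0" and vpos: "\<forall>m<v. \<exists>u. eval f (m # xs) u \<and> 0 < u"
    by (auto elim: evMnE)
  show ?case
  proof (rule ccontr)
    assume ne: "n \<noteq> v"
    show False
    proof (cases "n < v")
      case True
      then obtain u where "eval f (n # xs) u" "0 < u" using vpos by auto
      then show False using eval_Mn.IH(1) by fastforce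
    next
      case False
      then have "v < n" using ne by auto
      then obtain u where "eval f (v # xs) u" "\<forall>w. eval f (v # xs) w \<longrightarrow> u = w" "0 < u"
        using eval_Mn.IH(2) by blast
      then show False using v0 by auto
    qed
  qed
qed

definition compn :: "nat \<Rightarrow> recf \<Rightarrow> (nat list \<Rightarrow> nat) \<Rightarrow> bool" where
  "compn k P F \<longleftrightarrow> (\<forall>xs. length xs = k \<longrightarrow> eval P xs (F xs))"

lemma compn_cong: "compn k P F \<Longrightarrow> (\<And>xs. length xs = k \<Longrightarrow> F xs = G xs) \<Longrightarrow> compn k P G"
  unfolding compn_def by auto

lemma compn_Z: "compn k Z (\<lambda>_. 0)"
  unfolding compn_def by (auto intro: eval_Z)

lemma compn_S: "compn 1 S (\<lambda>xs. Suc (xs ! 0))"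
  unfolding compn_def by (auto intro: eval_S simp: length_Suc_conv)

lemma compn_Id: "i < k \<Longrightarrow> compn k (Id i) (\<lambda>xs. xs ! i)"
  unfolding compn_def by (auto intro: eval_Id)

lemma compn_Cn: "compn (length gs) f F \<Longrightarrow> list_all2 (\<lambda>g G. compn k g G) gs Gs
  \<Longrightarrow> compn k (Cn f gs) (\<lambda>xs. F (map (\<lambda>G. G xs) Gs))"
  unfolding compn_def
proof (intro allI impI)
  fix xs :: "nat list"
  assume f: "\<forall>xs. length xs = length gs \<longrightarrow> eval f xs (F xs)"
    and gs: "list_all2 (\<lambda>g G. \<forall>xs. length xs = k \<longrightarrow> eval g xs (G xs)) gs Gs"
    and l: "length xs = k"
  have len: "length Gs = length gs" using gs by (simp add: list_all2_lengthD)
  show "eval (Cn f gs) xs (F (map (\<lambda>G. G xs) Gs))"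
  proof (rule eval_Cn)
    show "length (map (\<lambda>G. G xs) Gs) = length gs" using len by simp
    show "\<forall>i<length gs. eval (gs ! i) xs (map (\<lambda>G. G xs) Gs ! i)"
      using gs l len by (auto simp: list_all2_conv_all_nth)
    show "eval f (map (\<lambda>G. G xs) Gs) (F (map (\<lambda>G. G xs) Gs))"
      using f len by simp
  qed
qed

lemma list_all2_intros: "list_all2 P [] []" "P a b \<Longrightarrow> list_all2 P as bs \<Longrightarrow> list_all2 P (a # as) (b # bs)"
  by auto

lemma compn_Pr: "compn k f Fb \<Longrightarrow> compn (Suc (Suc k)) g Gs \<Longrightarrow>
  compn (Suc k) (Pr f g) (\<lambda>xs. rec_nat (Fb (tl xs)) (\<lambda>n u. Gs (n # u # tl xs)) (hd xs))"
  unfolding compn_def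
proof (intro allI impI)
  fix xs :: "nat list"
  assume f: "\<forall>xs. length xs = k \<longrightarrow> eval f xs (Fb xs)"
    and g: "\<forall>xs. length xs = Suc (Suc k) \<longrightarrow> eval g xs (Gs xs)"
    and l: "length xs = Suc k"
  then obtain n ys where xs: "xs = n # ys" and ly: "length ys = k" by (cases xs) auto
  have "eval (Pr f g) (n # ys) (rec_nat (Fb ys) (\<lambda>n u. Gs (n # u # ys)) n)"
  proof (induction n)
    case 0
    then show ?case using f ly by (auto intro: eval_Pr0)
  next
    case (Suc n)
    then show ?case using g ly by (auto intro: eval_PrS)
  qed
  then show "eval (Pr f g) xs (rec_nat (Fb (tl xs)) (\<lambda>n u. Gs (n # u # tl xs)) (hd xs))"
    using xs by simp
qed

lemma compn_ce:
  assumes "compn 2 P F"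
  shows "ce {n. \<exists>m. F [m, n] = 0}"
  unfolding ce_def
proof (rule exI[of _ "Mn P"], rule set_eqI, rule iffI)
  fix n assume "n \<in> {n. \<exists>m. F [m, n] = 0}"
  then obtain m0 where m0: "F [m0, n] = 0" by auto
  define m where "m = (LEAST m. F [m, n] = 0)"
  have fm: "F [m, n] = 0" unfolding m_def by (rule LeastI[of _ m0]) (rule m0)
  have lt: "\<forall>m'<m. F [m', n] \<noteq> 0" unfolding m_def using not_less_Least by blast
  have ev: "\<And>a. eval P [a, n] (F [a, n])" using assms unfolding compn_def by auto
  have "eval (Mn P) [n] m"
    by (rule eval_Mn) (use ev[of m] fm lt ev in \<open>auto intro!: exI\<close>)
  then show "n \<in> {n. \<exists>v. eval (Mn P) [n] v}" by auto
next
  fix n assume "n \<in> {n. \<exists>v. eval (Mn P) [n] v}"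
  then obtain v where "eval (Mn P) [n] v" by auto
  then have "eval P [v, n] 0" by (auto elim: evMnE)
  moreover have "eval P [v, n] (F [v, n])" using assms unfolding compn_def by auto
  ultimately have "F [v, n] = 0" using eval_det by metis
  then show "n \<in> {n. \<exists>m. F [m, n] = 0}" by auto
qed

lemma compn_Cn1: "compn 1 f F \<Longrightarrow> compn k a A \<Longrightarrow> compn k (Cn f [a]) (\<lambda>xs. F [A xs])"
  using compn_Cn[of "[a]" f F k "[A]"] by simp

lemma compn_Cn2: "compn 2 f F \<Longrightarrow> compn k a A \<Longrightarrow> compn k b B \<Longrightarrow> compn k (Cn f [a, b]) (\<lambda>xs. F [A xs, B xs])"
  using compn_Cn[of "[a, b]" f F k "[A, B]"] by (simp add: numeral_2_eq_2)

lemma compn_rsuc: "compn k a A \<Longrightarrow> compn k (Cn S [a]) (\<lambda>xs. Suc (A xs))"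
  using compn_Cn1[OF compn_S] by simp

lemma len2: "length xs = 2 \<longleftrightarrow> (\<exists>a b. xs = [a, b])"
  by (auto simp: numeral_2_eq_2 length_Suc_conv)
lemma len1: "length xs = 1 \<longleftrightarrow> (\<exists>a. xs = [a])"
  by (auto simp: length_Suc_conv)

definition "pAdd = Pr (Id 0) (Cn S [Id 1])"
definition "pPred = Pr Z (Id 0)"
definition "pSub = Pr (Id 0) (Cn pPred [Id 1])"
definition "pMul = Pr Z (Cn pAdd [Id 1, Id 2])"
definition "pPow2 = Pr (Cn S [Z]) (Cn pAdd [Id 1, Id 1])"
definition "pTri = Pr Z (Cn pAdd [Id 1, Cn S [Id 0]])"


lemmas crules = compn_Pr compn_Z compn_rsuc compn_Id

lemma pAdd_sem: "compn 2 pAdd (\<lambda>xs. xs ! 0 + xs ! 1)"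
  unfolding pAdd_def numeral_2_eq_2
  apply (rule compn_cong, (rule crules | simp; fail)+)
  apply (auto simp: length_Suc_conv)
  subgoal for y by (induct y) auto
  done

lemma compn_add: "compn k a A \<Longrightarrow> compn k b B \<Longrightarrow> compn k (Cn pAdd [a, b]) (\<lambda>xs. A xs + B xs)"
  using compn_Cn2[OF pAdd_sem] by simp

lemma pPred_sem: "compn 1 pPred (\<lambda>xs. xs ! 0 - 1)"
  unfolding pPred_def One_nat_def
  apply (rule compn_cong, (rule crules | simp; fail)+)
  apply (auto simp: length_Suc_conv)
  subgoal for y by (induct y) auto
  done

lemma pSub_sem: "compn 2 pSub (\<lambda>xs. xs ! 1 - xs ! 0)"
  unfolding pSub_def numeral_2_eq_2
  apply (rule compn_cong, (rule crules compn_Cn1[OF pPred_sem] | simp; fail)+)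
  apply (auto simp: length_Suc_conv)
  subgoal for y by (induct y) auto
  done

lemma compn_sub: "compn k a A \<Longrightarrow> compn k b B \<Longrightarrow> compn k (Cn pSub [b, a]) (\<lambda>xs. A xs - B xs)"
  using compn_Cn2[OF pSub_sem] by simp

lemma pMul_sem: "compn 2 pMul (\<lambda>xs. xs ! 0 * xs ! 1)"
  unfolding pMul_def numeral_2_eq_2
  apply (rule compn_cong, (rule crules compn_add | simp; fail)+)
  apply (auto simp: length_Suc_conv)
  subgoal for y by (induct y) auto
  done

lemma compn_mul: "compn k a A \<Longrightarrow> compn k b B \<Longrightarrow> compn k (Cn pMul [a, b]) (\<lambda>xs. A xs * B xs)"
  using compn_Cn2[OF pMul_sem] by simp

lemma pPow2_sem: "compn 1 pPow2 (\<lambda>xs. 2 ^ (xs ! 0))"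
  unfolding pPow2_def One_nat_def
  apply (rule compn_cong, (rule crules compn_add | simp; fail)+)
  apply (auto simp: length_Suc_conv)
  subgoal for y by (induct y) auto
  done

lemma compn_pow2: "compn k a A \<Longrightarrow> compn k (Cn pPow2 [a]) (\<lambda>xs. 2 ^ A xs)"
  using compn_Cn1[OF pPow2_sem] by simp

lemma pTri_sem: "compn 1 pTri (\<lambda>xs. triangle (xs ! 0))"
  unfolding pTri_def One_nat_def
  apply (rule compn_cong, (rule crules compn_add | simp; fail)+)
  apply (auto simp: length_Suc_conv)
  subgoal for y by (induct y) auto
  done

lemma compn_tri: "compn k a A \<Longrightarrow> compn k (Cn pTri [a]) (\<lambda>xs. triangle (A xs))"
  using compn_Cn1[OF pTri_sem] by simp

fun rc :: "nat \<Rightarrow> recf" where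
  "rc 0 = Z" | "rc (Suc n) = Cn S [rc n]"

lemma compn_rc: "compn k (rc n) (\<lambda>_. n)"
  by (induction n) (auto intro: compn_Z compn_rsuc)

lemmas crules2 = crules compn_add compn_sub compn_mul compn_pow2 compn_tri compn_rc

definition "pPenc = Cn pAdd [Cn pTri [Cn pAdd [Id 0, Id 1]], Id 0]"

lemma pPenc_sem: "compn 2 pPenc (\<lambda>xs. prod_encode (xs ! 0, xs ! 1))"
  unfolding pPenc_def numeral_2_eq_2
  apply (rule compn_cong, (rule crules2 | simp; fail)+)
  apply (auto simp: length_Suc_conv prod_encode_def)
  done

lemma compn_penc: "compn k a A \<Longrightarrow> compn k b B \<Longrightarrow> compn k (Cn pPenc [a, b]) (\<lambda>xs. prod_encode (A xs, B xs))"
  using compn_Cn2[OF pPenc_sem] by simp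

primrec tr :: "nat \<Rightarrow> nat" where
  "tr 0 = 0"
| "tr (Suc n) = tr n + (if triangle (Suc (tr n)) \<le> Suc n then 1 else 0)"

lemma tr_prop: "triangle (tr n) \<le> n \<and> n < triangle (Suc (tr n))"
  by (induction n) auto

lemma prod_decode_tr: "prod_decode n = (n - triangle (tr n), tr n - (n - triangle (tr n)))"
proof -
  have "prod_encode (n - triangle (tr n), tr n - (n - triangle (tr n))) = n"
    using tr_prop[of n] by (auto simp: prod_encode_def)
  then show ?thesis by (metis prod_encode_inverse)
qed

definition "pTr = Pr Z (Cn pAdd [Id 1, Cn pSub [Cn pSub [Cn S [Id 0], Cn pTri [Cn S [Id 1]]], rc 1]])"

lemma pTr_sem: "compn 1 pTr (\<lambda>xs. tr (xs ! 0))"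
  unfolding pTr_def One_nat_def
  apply (rule compn_cong, (rule crules2 | simp; fail)+)
  apply (auto simp: length_Suc_conv)
  subgoal for y by (induct y) auto
  done

definition "pFst = Cn pSub [Cn pTri [Cn pTr [Id 0]], Id 0]"
definition "pSnd = Cn pSub [pFst, Cn pTr [Id 0]]"

lemma pFst_sem: "compn 1 pFst (\<lambda>xs. fst (prod_decode (xs ! 0)))"
  unfolding pFst_def One_nat_def
  apply (rule compn_cong, (rule crules2 compn_Cn1[OF pTr_sem] | simp; fail)+)
  apply (auto simp: length_Suc_conv prod_decode_tr)
  done

lemma pSnd_sem: "compn 1 pSnd (\<lambda>xs. snd (prod_decode (xs ! 0)))"
  unfolding pSnd_def
  apply (rule compn_cong, (rule crules2 compn_Cn1[OF pTr_sem] pFst_sem | simp; fail)+)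
  apply (auto simp: length_Suc_conv prod_decode_tr)
  done

lemma compn_fst: "compn k a A \<Longrightarrow> compn k (Cn pFst [a]) (\<lambda>xs. fst (prod_decode (A xs)))"
  using compn_Cn1[OF pFst_sem] by simp
lemma compn_snd: "compn k a A \<Longrightarrow> compn k (Cn pSnd [a]) (\<lambda>xs. snd (prod_decode (A xs)))"
  using compn_Cn1[OF pSnd_sem] by simp

definition "rdiff a b = Cn pAdd [Cn pSub [b, a], Cn pSub [a, b]]"
lemma compn_diff: "compn k a A \<Longrightarrow> compn k b B \<Longrightarrow> compn k (rdiff a b) (\<lambda>xs. (A xs - B xs) + (B xs - A xs))"
  unfolding rdiff_def by (intro compn_add compn_sub)

definition "rneq a b = Cn pSub [Cn pSub [rdiff a b, rc 1], rc 1]"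
lemma compn_neq: "compn k a A \<Longrightarrow> compn k b B \<Longrightarrow> compn k (rneq a b) (\<lambda>xs. if A xs = B xs then 0 else 1)"
  unfolding rneq_def
  by (rule compn_cong, (rule crules2 compn_diff | simp; fail)+)

lemmas crules3 = crules2 compn_penc compn_fst compn_snd compn_diff compn_neq

datatype ex = V nat | C nat | Pl ex ex | Pe ex ex | Fs ex | Sn ex

primrec eprog :: "ex \<Rightarrow> recf" where
  "eprog (V i) = Id i"
| "eprog (C n) = rc n"
| "eprog (Pl a b) = Cn pAdd [eprog a, eprog b]"
| "eprog (Pe a b) = Cn pPenc [eprog a, eprog b]"
| "eprog (Fs a) = Cn pFst [eprog a]"
| "eprog (Sn a) = Cn pSnd [eprog a]"

primrec esem :: "ex \<Rightarrow> nat list \<Rightarrow> nat" where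
  "esem (V i) xs = xs ! i"
| "esem (C n) xs = n"
| "esem (Pl a b) xs = esem a xs + esem b xs"
| "esem (Pe a b) xs = prod_encode (esem a xs, esem b xs)"
| "esem (Fs a) xs = fst (prod_decode (esem a xs))"
| "esem (Sn a) xs = snd (prod_decode (esem a xs))"

primrec evars :: "ex \<Rightarrow> nat set" where
  "evars (V i) = {i}"
| "evars (C n) = {}"
| "evars (Pl a b) = evars a \<union> evars b"
| "evars (Pe a b) = evars a \<union> evars b"
| "evars (Fs a) = evars a"
| "evars (Sn a) = evars a"

lemma compn_ex: "(\<forall>i\<in>evars e. i < k) \<Longrightarrow> compn k (eprog e) (esem e)"
proof (induction e)
  case (V i) then show ?case using compn_Id[of i k] by simp
next
  case (C n) then show ?case using compn_rc[of k n] by simp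
next
  case (Pl a b) then show ?case using compn_add[of k "eprog a" "esem a" "eprog b" "esem b"] by simp
next
  case (Pe a b) then show ?case using compn_penc[of k "eprog a" "esem a" "eprog b" "esem b"] by simp
next
  case (Fs a) then show ?case using compn_fst[of k "eprog a" "esem a"] by simp
next
  case (Sn a) then show ?case using compn_snd[of k "eprog a" "esem a"] by simp
qed

type_synonym aspec = "nat \<times> nat \<times> ex \<times> ex"

fun mkb :: "nat \<Rightarrow> nat \<Rightarrow> nat \<Rightarrow> nat \<Rightarrow> basic" where
  "mkb p t a b = (if p = 0 then Pos else Neg) (if t = 0 then Lt a b else Eq a b)"

fun toB :: "aspec \<Rightarrow> nat list \<Rightarrow> basic" where
  "toB (p, t, a, b) xs = mkb p t (esem a xs) (esem b xs)"

fun aprog :: "aspec \<Rightarrow> recf" where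
  "aprog (p, t, a, b) = Cn pAdd [Cn pMul [rc 2, Cn pPenc [rc t, Cn pPenc [eprog a, eprog b]]], rc p]"

fun aok :: "nat \<Rightarrow> aspec \<Rightarrow> bool" where
  "aok k (p, t, a, b) \<longleftrightarrow> p \<le> 1 \<and> t \<le> 1 \<and> (\<forall>i\<in>evars a. i < k) \<and> (\<forall>i\<in>evars b. i < k)"

lemma compn_aprog: "aok k s \<Longrightarrow> compn k (aprog s) (\<lambda>xs. basic_code (toB s xs))"
proof -
  assume ok: "aok k s"
  obtain p t a b where s: "s = (p, t, a, b)" by (cases s) auto
  have ca: "compn k (eprog a) (esem a)" and cb: "compn k (eprog b) (esem b)"
    using ok s compn_ex by auto
  have "compn k (aprog s) (\<lambda>xs. 2 * prod_encode (t, prod_encode (esem a xs, esem b xs)) + p)"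
    unfolding s aprog.simps
    by (intro compn_add compn_mul compn_rc compn_penc ca cb)
  then show ?thesis
    by (rule compn_cong) (use ok s in \<open>auto simp: mkb.simps le_Suc_eq\<close>)
qed

fun rnotin :: "recf \<Rightarrow> recf list \<Rightarrow> recf" where
  "rnotin p [] = rc 1"
| "rnotin p (q # qs) = Cn pMul [rneq p q, rnotin p qs]"

fun rse :: "recf list \<Rightarrow> recf" where
  "rse [] = rc 0"
| "rse (p # ps) = Cn pAdd [Cn pMul [Cn pPow2 [p], rnotin p ps], rse ps]"

lemma compn_rnotin: "list_all2 (\<lambda>q Q. compn k q Q) qs Qs \<Longrightarrow> compn k p P \<Longrightarrow>
  compn k (rnotin p qs) (\<lambda>xs. if P xs \<in> set (map (\<lambda>Q. Q xs) Qs) then 0 else 1)"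
proof (induction qs Qs rule: list_all2_induct)
  case Nil then show ?case using compn_rc[of k 1] by simp
next
  case (Cons q qs Q Qs)
  have "compn k (rnotin p (q # qs)) (\<lambda>xs. (if P xs = Q xs then 0 else 1) *
      (if P xs \<in> set (map (\<lambda>Q. Q xs) Qs) then 0 else 1))"
    using Cons by (simp add: compn_mul compn_neq)
  then show ?case by (rule compn_cong) auto
qed

lemma compn_rse: "list_all2 (\<lambda>q Q. compn k q Q) qs Qs \<Longrightarrow>
  compn k (rse qs) (\<lambda>xs. set_encode (set (map (\<lambda>Q. Q xs) Qs)))"
proof (induction qs Qs rule: list_all2_induct)
  case Nil then show ?case using compn_rc[of k 0] by simp
next
  case (Cons q qs Q Qs)
  have "compn k (rse (q # qs)) (\<lambda>xs. 2 ^ Q xs * (if Q xs \<in> set (map (\<lambda>Q. Q xs) Qs) then 0 else 1)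
     + set_encode (set (map (\<lambda>Q. Q xs) Qs)))"
    using compn_add[OF compn_mul[OF compn_pow2[OF Cons(1)] compn_rnotin[OF Cons(2) Cons(1)]] Cons(3)]
    by simp
  then show ?case by (rule compn_cong) (auto simp: insert_absorb)
qed

definition gprog :: "aspec list \<Rightarrow> aspec \<Rightarrow> recf" where
  "gprog as ph = Cn pPenc [rse (map aprog as), aprog ph]"

definition gsem :: "aspec list \<Rightarrow> aspec \<Rightarrow> nat list \<Rightarrow> nat" where
  "gsem as ph xs = pair_code (set (map (\<lambda>a. toB a xs) as)) (toB ph xs)"

lemma compn_gprog: "(\<forall>a\<in>set as. aok k a) \<Longrightarrow> aok k ph \<Longrightarrow> compn k (gprog as ph) (gsem as ph)"
proof -
  assume as: "\<forall>a\<in>set as. aok k a" and ph: "aok k ph"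
  have l: "list_all2 (\<lambda>q Q. compn k q Q) (map aprog as) (map (\<lambda>a xs. basic_code (toB a xs)) as)"
    using as by (induction as) (auto simp: compn_aprog)
  have "compn k (gprog as ph) (\<lambda>xs. prod_encode (set_encode (set (map (\<lambda>Q. Q xs) (map (\<lambda>a xs. basic_code (toB a xs)) as))), basic_code (toB ph xs)))"
    unfolding gprog_def by (intro compn_penc compn_rse l compn_aprog ph)
  then show ?thesis
    by (rule compn_cong) (simp add: gsem_def pair_code_def image_image comp_def)
qed

fun rprod :: "recf list \<Rightarrow> recf" where
  "rprod [] = rc 1"
| "rprod (p # ps) = Cn pMul [p, rprod ps]"

lemma compn_rprod: "list_all2 (\<lambda>q Q. compn k q Q) qs Qs \<Longrightarrow>
  compn k (rprod qs) (\<lambda>xs. prod_list (map (\<lambda>Q. Q xs) Qs))"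
proof (induction qs Qs rule: list_all2_induct)
  case Nil then show ?case using compn_rc[of k 1] by simp
next
  case (Cons q qs Q Qs)
  then show ?case using compn_mul by simp
qed

definition "Yv = Fs (V 0)"
definition "Xv = Fs (Sn (V 0))"
definition "Tv = Fs (Sn (Sn (V 0)))"
definition "Y2 = Fs (Sn (Sn (Sn (V 0))))"
definition "X2 = Fs (Sn (Sn (Sn (Sn (V 0)))))"
definition "T2 = Sn (Sn (Sn (Sn (Sn (V 0)))))"
definition "Zv = Pl (Pl Yv Tv) (C 1)"
definition "Z2 = Pl (Pl Y2 T2) (C 1)"

definition alt :: "ex \<Rightarrow> ex \<Rightarrow> aspec" where "alt a b = (0, 0, a, b)"
definition aeq :: "ex \<Rightarrow> ex \<Rightarrow> aspec" where "aeq a b = (0, 1, a, b)"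
definition anlt :: "ex \<Rightarrow> ex \<Rightarrow> aspec" where "anlt a b = (1, 0, a, b)"
definition aneq :: "ex \<Rightarrow> ex \<Rightarrow> aspec" where "aneq a b = (1, 1, a, b)"

definition "W0 = [alt Yv Xv, alt Xv Zv]"
definition "W1 = [alt Yv Xv, alt Xv Zv, alt Y2 X2, alt X2 Z2]"
definition "W1x = [alt Yv Xv, alt Xv Zv, alt Y2 Xv, alt Xv Z2]"
definition "E1 = Pe Yv Xv"
definition "E2 = Pe Y2 X2"
definition "E3 = Pe Y2 Xv"

definition specL :: "(aspec list \<times> aspec) list" where
  "specL = [
     (W0, aeq E1 E1),
     (alt Xv X2 # W1, alt E1 E2),
     (alt Yv Y2 # W1x, alt E1 E3),
     (alt X2 Xv # W1, anlt E1 E2),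
     (alt Y2 Yv # W1x, anlt E1 E3),
     (W0, anlt E1 E1),
     (alt Xv X2 # W1, aneq E1 E2),
     (alt Yv Y2 # W1x, aneq E1 E3),
     (alt X2 Xv # W1, aneq E1 E2),
     (alt Y2 Yv # W1x, aneq E1 E3)]"

definition spec :: "nat \<Rightarrow> aspec list \<times> aspec" where "spec k = specL ! k"

lemmas spec_defs = Yv_def Xv_def Tv_def Y2_def X2_def T2_def Zv_def Z2_def alt_def aeq_def anlt_def aneq_def
  W0_def W1_def W1x_def E1_def E2_def E3_def

lemma spec_ok: "k < 10 \<Longrightarrow> (\<forall>a\<in>set (fst (spec k)). aok 2 a) \<and> aok 2 (snd (spec k))"
  unfolding spec_def specL_def
  by (simp add: less_Suc_eq numeral_eq_Suc spec_defs) (elim disjE; simp)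

definition Wset :: "nat set" where
  "Wset = {n. \<exists>m. \<exists>k<10. gsem (fst (spec k)) (snd (spec k)) [m, n] = n}"

definition "Fprog = rprod (map (\<lambda>k. rdiff (gprog (fst (spec k)) (snd (spec k))) (Id 1)) [0..<10])"

lemma ce_Wset: "ce Wset"
proof -
  have l: "list_all2 (\<lambda>q Q. compn 2 q Q)
     (map (\<lambda>k. rdiff (gprog (fst (spec k)) (snd (spec k))) (Id 1)) [0..<10])
     (map (\<lambda>k xs. (gsem (fst (spec k)) (snd (spec k)) xs - xs ! 1) + (xs ! 1 - gsem (fst (spec k)) (snd (spec k)) xs)) [0..<10])"
    unfolding list_all2_map1 list_all2_map2
    by (rule list.rel_refl_strong) (auto intro!: compn_diff compn_gprog compn_Id dest: spec_ok)
  have "ce {n. \<exists>m. prod_list (map (\<lambda>Q. Q [m, n]) (map (\<lambda>k xs. (gsem (fst (spec k)) (snd (spec k)) xs - xs ! 1) + (xs ! 1 - gsem (fst (spec k)) (snd (spec k)) xs)) [0..<10])) = 0}"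
    by (rule compn_ce[OF compn_rprod[OF l]])
  moreover have "{n. \<exists>m. prod_list (map (\<lambda>Q. Q [m, n]) (map (\<lambda>k xs. (gsem (fst (spec k)) (snd (spec k)) xs - xs ! 1) + (xs ! 1 - gsem (fst (spec k)) (snd (spec k)) xs)) [0..<10])) = 0} = Wset"
    unfolding Wset_def
  proof (intro set_eqI iffI)
    fix n assume "n \<in> {n. \<exists>m. prod_list (map (\<lambda>Q. Q [m, n]) (map (\<lambda>k xs. (gsem (fst (spec k)) (snd (spec k)) xs - xs ! 1) + (xs ! 1 - gsem (fst (spec k)) (snd (spec k)) xs)) [0..<10])) = 0}"
    then obtain m k where "k < 10" "(gsem (fst (spec k)) (snd (spec k)) [m, n] - n) + (n - gsem (fst (spec k)) (snd (spec k)) [m, n]) = 0"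
      by (auto simp: prod_list_zero_iff)
    then show "n \<in> {n. \<exists>m. \<exists>k<10. gsem (fst (spec k)) (snd (spec k)) [m, n] = n}"
      apply simp apply (rule exI[of _ m], rule exI[of _ k]) apply simp
      done
  next
    fix n assume "n \<in> {n. \<exists>m. \<exists>k<10. gsem (fst (spec k)) (snd (spec k)) [m, n] = n}"
    then obtain m k where "k < 10" "gsem (fst (spec k)) (snd (spec k)) [m, n] = n" by auto
    then show "n \<in> {n. \<exists>m. prod_list (map (\<lambda>Q. Q [m, n]) (map (\<lambda>k xs. (gsem (fst (spec k)) (snd (spec k)) xs - xs ! 1) + (xs ! 1 - gsem (fst (spec k)) (snd (spec k)) xs)) [0..<10])) = 0}"
      by (auto simp: prod_list_zero_iff image_iff intro!: exI[of _ m] bexI[of _ k])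
  qed
  ultimately show ?thesis by simp
qed

lemma atom_code_inj: "atom_code a = atom_code b \<longleftrightarrow> a = b"
  by (cases a; cases b) auto

lemma basic_code_inj: "basic_code a = basic_code b \<longleftrightarrow> a = b"
  by (cases a; cases b) (auto simp: atom_code_inj, presburger+)

lemma pair_code_eq: "finite \<alpha> \<Longrightarrow> finite \<beta> \<Longrightarrow> pair_code \<alpha> \<phi> = pair_code \<beta> \<psi> \<longleftrightarrow> \<alpha> = \<beta> \<and> \<phi> = \<psi>"
proof -
  assume f: "finite \<alpha>" "finite \<beta>"
  have inj: "inj basic_code" by (auto intro: injI simp: basic_code_inj)
  have "set_encode (basic_code ` \<alpha>) = set_encode (basic_code ` \<beta>) \<longleftrightarrow> basic_code ` \<alpha> = basic_code ` \<beta>"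
    using f by (simp add: set_encode_eq)
  also have "\<dots> \<longleftrightarrow> \<alpha> = \<beta>" using inj by (simp add: inj_image_eq_iff)
  finally show ?thesis unfolding pair_code_def by (auto simp: basic_code_inj)
qed

abbreviation PL :: "nat \<Rightarrow> nat \<Rightarrow> basic" where "PL a b \<equiv> Pos (Lt a b)"

definition gamL :: "nat \<Rightarrow> nat \<Rightarrow> nat \<Rightarrow> nat \<Rightarrow> nat \<Rightarrow> nat \<Rightarrow> (basic set \<times> basic) list" where
  "gamL y x t y2 x2 t2 = (let z = y + t + 1; z2 = y2 + t2 + 1; e = prod_encode (y, x);
      e2 = prod_encode (y2, x2); e3 = prod_encode (y2, x) in
   [({PL y x, PL x z}, Pos (Eq e e)),
    ({PL x x2, PL y x, PL x z, PL y2 x2, PL x2 z2}, PL e e2),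
    ({PL y y2, PL y x, PL x z, PL y2 x, PL x z2}, PL e e3),
    ({PL x2 x, PL y x, PL x z, PL y2 x2, PL x2 z2}, Neg (Lt e e2)),
    ({PL y2 y, PL y x, PL x z, PL y2 x, PL x z2}, Neg (Lt e e3)),
    ({PL y x, PL x z}, Neg (Lt e e)),
    ({PL x x2, PL y x, PL x z, PL y2 x2, PL x2 z2}, Neg (Eq e e2)),
    ({PL y y2, PL y x, PL x z, PL y2 x, PL x z2}, Neg (Eq e e3)),
    ({PL x2 x, PL y x, PL x z, PL y2 x2, PL x2 z2}, Neg (Eq e e2)),
    ({PL y2 y, PL y x, PL x z, PL y2 x, PL x z2}, Neg (Eq e e3))])"

definition Gam :: "basic set \<Rightarrow> basic \<Rightarrow> bool" where
  "Gam \<alpha> \<phi> \<longleftrightarrow> (\<exists>y x t y2 x2 t2. (\<alpha>, \<phi>) \<in> set (gamL y x t y2 x2 t2))"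

definition enc6 :: "nat \<Rightarrow> nat \<Rightarrow> nat \<Rightarrow> nat \<Rightarrow> nat \<Rightarrow> nat \<Rightarrow> nat" where
  "enc6 a b c d e f = prod_encode (a, prod_encode (b, prod_encode (c, prod_encode (d, prod_encode (e, f)))))"

lemma ex_m: "(\<exists>m. P m) \<longleftrightarrow> (\<exists>a b c d e f. P (enc6 a b c d e f))"
proof
  assume "\<exists>m. P m"
  then obtain m where "P m" by auto
  let ?a = "fst (prod_decode m)" and ?r1 = "snd (prod_decode m)"
  let ?b = "fst (prod_decode ?r1)" and ?r2 = "snd (prod_decode ?r1)"
  let ?c = "fst (prod_decode ?r2)" and ?r3 = "snd (prod_decode ?r2)"
  let ?d = "fst (prod_decode ?r3)" and ?r4 = "snd (prod_decode ?r3)"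
  let ?e = "fst (prod_decode ?r4)" and ?f = "snd (prod_decode ?r4)"
  have "enc6 ?a ?b ?c ?d ?e ?f = m" unfolding enc6_def by simp
  then show "\<exists>a b c d e f. P (enc6 a b c d e f)" using \<open>P m\<close> by metis
qed auto

definition evS :: "nat \<Rightarrow> aspec list \<times> aspec \<Rightarrow> basic set \<times> basic" where
  "evS m s = (set (map (\<lambda>a. toB a [m, 0]) (fst s)), toB (snd s) [m, 0])"

lemma map_evS: "map (evS (enc6 y x t y2 x2 t2)) specL = gamL y x t y2 x2 t2"
  unfolding specL_def gamL_def evS_def Let_def
  by (simp add: spec_defs enc6_def insert_commute)

lemma esem_dep: "(\<forall>i\<in>evars e. xs ! i = ys ! i) \<Longrightarrow> esem e xs = esem e ys"
  by (induction e) auto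

lemma toB_dep: "aok 1 a \<Longrightarrow> toB a [m, n] = toB a [m, 0]"
  by (cases a) (auto intro!: esem_dep)

lemma spec_ok1: "k < 10 \<Longrightarrow> (\<forall>a\<in>set (fst (spec k)). aok 1 a) \<and> aok 1 (snd (spec k))"
  unfolding spec_def specL_def
  by (simp add: less_Suc_eq numeral_eq_Suc spec_defs) (elim disjE; simp)

lemma length_specL: "length specL = 10" by (simp add: specL_def)

lemma gsem_evS: "k < 10 \<Longrightarrow> gsem (fst (spec k)) (snd (spec k)) [m, n] = pair_code (fst (evS m (specL ! k))) (snd (evS m (specL ! k)))"
proof -
  assume k: "k < 10"
  have a: "map (\<lambda>a. toB a [m, n]) (fst (spec k)) = map (\<lambda>a. toB a [m, 0]) (fst (spec k))"
    using spec_ok1[OF k] by (intro map_cong refl) (rule toB_dep, auto)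
  have b: "toB (snd (spec k)) [m, n] = toB (snd (spec k)) [m, 0]"
    using spec_ok1[OF k] by (intro toB_dep) auto
  show ?thesis unfolding gsem_def evS_def a b by (simp add: spec_def)
qed

lemma W_char: "finite \<alpha> \<Longrightarrow> pair_code \<alpha> \<phi> \<in> Wset \<longleftrightarrow> Gam \<alpha> \<phi>"
proof -
  assume fin: "finite \<alpha>"
  have "pair_code \<alpha> \<phi> \<in> Wset \<longleftrightarrow> (\<exists>m. \<exists>k<10. (\<alpha>, \<phi>) = evS m (specL ! k))"
  proof -
    have fin2: "finite (fst (evS m s))" for m s by (simp add: evS_def)
    have "pair_code \<alpha> \<phi> \<in> Wset \<longleftrightarrow> (\<exists>m. \<exists>k<10. pair_code (fst (evS m (specL ! k))) (snd (evS m (specL ! k))) = pair_code \<alpha> \<phi>)"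
      unfolding Wset_def using gsem_evS by (simp, metis)
    also have "\<dots> \<longleftrightarrow> (\<exists>m. \<exists>k<10. (\<alpha>, \<phi>) = evS m (specL ! k))"
    proof -
      have "pair_code (fst (evS m s)) (snd (evS m s)) = pair_code \<alpha> \<phi> \<longleftrightarrow> (\<alpha>, \<phi>) = evS m s" for m s
        using pair_code_eq[OF fin2[of m s] fin, of "snd (evS m s)" \<phi>]
        by (cases "evS m s") auto
      then show ?thesis by simp
    qed
    finally show ?thesis .
  qed
  also have "\<dots> \<longleftrightarrow> (\<exists>m. (\<alpha>, \<phi>) \<in> set (map (evS m) specL))"
  proof
    assume "\<exists>m. \<exists>k<10. (\<alpha>, \<phi>) = evS m (specL ! k)"
    then obtain m k where "k < 10" "(\<alpha>, \<phi>) = evS m (specL ! k)" by blast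
    then have "(\<alpha>, \<phi>) \<in> set (map (evS m) specL)"
      by (auto simp: length_specL)
    then show "\<exists>m. (\<alpha>, \<phi>) \<in> set (map (evS m) specL)" by blast
  next
    assume "\<exists>m. (\<alpha>, \<phi>) \<in> set (map (evS m) specL)"
    then obtain m where "(\<alpha>, \<phi>) \<in> set (map (evS m) specL)" by blast
    then obtain k where "k < length (map (evS m) specL)" "map (evS m) specL ! k = (\<alpha>, \<phi>)"
      unfolding in_set_conv_nth by blast
    then show "\<exists>m. \<exists>k<10. (\<alpha>, \<phi>) = evS m (specL ! k)"
      by (intro exI[of _ m] exI[of _ k]) (auto simp: length_specL)
  qed
  also have "\<dots> \<longleftrightarrow> Gam \<alpha> \<phi>"
    using ex_m[of "\<lambda>m. (\<alpha>, \<phi>) \<in> set (map (evS m) specL)"]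
    unfolding Gam_def by (simp only: map_evS)
  finally show ?thesis .
qed

definition dy :: "nat \<Rightarrow> nat" where "dy e = fst (prod_decode e)"
definition dx :: "nat \<Rightarrow> nat" where "dx e = snd (prod_decode e)"

lemma dy_enc[simp]: "dy (prod_encode (a, b)) = a" by (simp add: dy_def)
lemma dx_enc[simp]: "dx (prod_encode (a, b)) = b" by (simp add: dx_def)
lemma enc_d: "prod_encode (dy e, dx e) = e" by (simp add: dy_def dx_def)

definition PhiD :: "struc \<Rightarrow> nat set" where
  "PhiD A = {e. (dy e, dx e) \<in> snd A \<and> (\<exists>z. (dx e, z) \<in> snd A \<and> dy e < z)}"

definition PhiR :: "struc \<Rightarrow> (nat \<times> nat) set" where
  "PhiR A = {(e, e'). e \<in> PhiD A \<and> e' \<in> PhiD A \<and>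
     ((dx e, dx e') \<in> snd A \<or> (dx e = dx e' \<and> (dy e, dy e') \<in> snd A))}"

definition Phi :: "struc \<Rightarrow> struc" where "Phi A = (PhiD A, PhiR A)"

definition slo :: "struc \<Rightarrow> bool" where
  "slo A \<longleftrightarrow> snd A \<subseteq> fst A \<times> fst A \<and> (\<forall>a. (a, a) \<notin> snd A) \<and> trans (snd A) \<and>
     (\<forall>a\<in>fst A. \<forall>b\<in>fst A. a \<noteq> b \<longrightarrow> (a, b) \<in> snd A \<or> (b, a) \<in> snd A)"

lemma Phi_structure: "is_structure (Phi A)"
  unfolding is_structure_def Phi_def PhiR_def by auto

lemma PhiD_enc: "prod_encode (y, x) \<in> PhiD A \<longleftrightarrow> (y, x) \<in> snd A \<and> (\<exists>z. (x, z) \<in> snd A \<and> y < z)"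
  unfolding PhiD_def by simp

lemma sub_diag: "slo A \<Longrightarrow> PL a b \<in> diag A \<longleftrightarrow> (a, b) \<in> snd A"
  unfolding diag_def slo_def by auto

lemma Gam_finite: "Gam \<alpha> \<phi> \<Longrightarrow> finite \<alpha>"
  unfolding Gam_def gamL_def Let_def by auto

lemma ex_t: "y < (z::nat) \<Longrightarrow> \<exists>t. z = y + t + 1"
  by presburger

lemma PhiD_obtain:
  assumes "e \<in> PhiD A"
  obtains y x t where "e = prod_encode (y, x)" "(y, x) \<in> snd A" "(x, y + t + 1) \<in> snd A"
proof -
  from assms obtain z where "(dy e, dx e) \<in> snd A" "(dx e, z) \<in> snd A" "dy e < z"
    unfolding PhiD_def by blast
  moreover obtain t where "z = dy e + t + 1" using ex_t[OF \<open>dy e < z\<close>] by blast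
  ultimately show ?thesis using that[of "dy e" "dx e" t] enc_d[of e] by simp
qed

lemma Gam_intro: "(\<alpha>, \<phi>) \<in> set (gamL y x t y2 x2 t2) \<Longrightarrow> Gam \<alpha> \<phi>"
  unfolding Gam_def by blast

lemma enum_sup:
  assumes A: "slo A" and h: "holds (Phi A) \<phi>"
  shows "\<exists>\<alpha>. \<alpha> \<subseteq> diag A \<and> Gam \<alpha> \<phi>"
proof -
  have st: "snd A \<subseteq> fst A \<times> fst A" and irr: "\<And>a. (a, a) \<notin> snd A"
    and tot: "\<And>a b. a \<in> fst A \<Longrightarrow> b \<in> fst A \<Longrightarrow> a \<noteq> b \<Longrightarrow> (a, b) \<in> snd A \<or> (b, a) \<in> snd A"
    using A unfolding slo_def by auto
  have tot2: "(a, b) \<in> snd A \<or> (b, a) \<in> snd A" if "(a, c) \<in> snd A" "(b, d) \<in> snd A" "a \<noteq> b" for a b c d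
    using tot[of a b] that st by auto
  have tot3: "(a, b) \<in> snd A \<or> (b, a) \<in> snd A" if "(c, a) \<in> snd A" "(d, b) \<in> snd A" "a \<noteq> b" for a b c d
    using tot[of a b] that st by auto
  have sd: "PL a b \<in> diag A \<longleftrightarrow> (a, b) \<in> snd A" for a b using sub_diag[OF A] .
  show ?thesis
  proof (cases \<phi>)
    case (Pos at)
    then show ?thesis
    proof (cases at)
      case (Lt u v)
      with h Pos have u: "u \<in> PhiD A" and v: "v \<in> PhiD A" and r: "(u, v) \<in> PhiR A"
        by (auto simp: Phi_def)
      obtain y x t where u': "u = prod_encode (y, x)" "(y, x) \<in> snd A" "(x, y + t + 1) \<in> snd A"
        using PhiD_obtain[OF u] by blast
      obtain y2 x2 t2 where v': "v = prod_encode (y2, x2)" "(y2, x2) \<in> snd A" "(x2, y2 + t2 + 1) \<in> snd A"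
        using PhiD_obtain[OF v] by blast
      from r u' v' have "(x, x2) \<in> snd A \<or> (x = x2 \<and> (y, y2) \<in> snd A)" by (simp add: PhiR_def)
      then show ?thesis
      proof
        assume "(x, x2) \<in> snd A"
        then show ?thesis using u' v' Pos Lt
          by (intro exI[of _ "{PL x x2, PL y x, PL x (y + t + 1), PL y2 x2, PL x2 (y2 + t2 + 1)}"] conjI Gam_intro[of _ _ y x t y2 x2 t2])
             (simp_all add: sd gamL_def Let_def)
      next
        assume "x = x2 \<and> (y, y2) \<in> snd A"
        then show ?thesis using u' v' Pos Lt
          by (intro exI[of _ "{PL y y2, PL y x, PL x (y + t + 1), PL y2 x, PL x (y2 + t2 + 1)}"] conjI Gam_intro[of _ _ y x t y2 x2 t2])
             (simp_all add: sd gamL_def Let_def)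
      qed
    next
      case (Eq u v)
      with h Pos have u: "u \<in> PhiD A" and v: "v = u"
        by (auto simp: Phi_def)
      obtain y x t where u': "u = prod_encode (y, x)" "(y, x) \<in> snd A" "(x, y + t + 1) \<in> snd A"
        using PhiD_obtain[OF u] by blast
      show ?thesis using u' v Pos Eq
        by (intro exI[of _ "{PL y x, PL x (y + t + 1)}"] conjI Gam_intro[of _ _ y x t y x t])
           (simp_all add: sd gamL_def Let_def)
    qed
  next
    case (Neg at)
    then show ?thesis
    proof (cases at)
      case (Lt u v)
      with h Neg have u: "u \<in> PhiD A" and v: "v \<in> PhiD A" and r: "(u, v) \<notin> PhiR A"
        by (auto simp: Phi_def)
      obtain y x t where u': "u = prod_encode (y, x)" "(y, x) \<in> snd A" "(x, y + t + 1) \<in> snd A"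
        using PhiD_obtain[OF u] by blast
      obtain y2 x2 t2 where v': "v = prod_encode (y2, x2)" "(y2, x2) \<in> snd A" "(x2, y2 + t2 + 1) \<in> snd A"
        using PhiD_obtain[OF v] by blast
      from r u v u' v' have nr: "(x, x2) \<notin> snd A" "x = x2 \<longrightarrow> (y, y2) \<notin> snd A" by (auto simp: PhiR_def)
      show ?thesis
      proof (cases "x = x2")
        case False
        then have "(x2, x) \<in> snd A" using tot3[OF u'(2) v'(2)] nr by auto
        then show ?thesis using u' v' Neg Lt
          by (intro exI[of _ "{PL x2 x, PL y x, PL x (y + t + 1), PL y2 x2, PL x2 (y2 + t2 + 1)}"] conjI Gam_intro[of _ _ y x t y2 x2 t2])
             (simp_all add: sd gamL_def Let_def)
      next
        case True
        show ?thesis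
        proof (cases "y = y2")
          case True
          then show ?thesis using u' v' Neg Lt \<open>x = x2\<close>
            by (intro exI[of _ "{PL y x, PL x (y + t + 1)}"] conjI Gam_intro[of _ _ y x t y x t])
               (simp_all add: sd gamL_def Let_def)
        next
          case False
          then have "(y2, y) \<in> snd A" using tot2[OF u'(2) v'(2)] nr \<open>x = x2\<close> by auto
          then show ?thesis using u' v' Neg Lt \<open>x = x2\<close>
            by (intro exI[of _ "{PL y2 y, PL y x, PL x (y + t + 1), PL y2 x, PL x (y2 + t2 + 1)}"] conjI Gam_intro[of _ _ y x t y2 x2 t2])
               (simp_all add: sd gamL_def Let_def)
        qed
      qed
    next
      case (Eq u v)
      with h Neg have u: "u \<in> PhiD A" and v: "v \<in> PhiD A" and ne: "u \<noteq> v"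
        by (auto simp: Phi_def)
      obtain y x t where u': "u = prod_encode (y, x)" "(y, x) \<in> snd A" "(x, y + t + 1) \<in> snd A"
        using PhiD_obtain[OF u] by blast
      obtain y2 x2 t2 where v': "v = prod_encode (y2, x2)" "(y2, x2) \<in> snd A" "(x2, y2 + t2 + 1) \<in> snd A"
        using PhiD_obtain[OF v] by blast
      show ?thesis
      proof (cases "x = x2")
        case False
        then have "(x, x2) \<in> snd A \<or> (x2, x) \<in> snd A" using tot3[OF u'(2) v'(2)] by auto
        then show ?thesis
        proof
          assume "(x, x2) \<in> snd A"
          then show ?thesis using u' v' Neg Eq
            by (intro exI[of _ "{PL x x2, PL y x, PL x (y + t + 1), PL y2 x2, PL x2 (y2 + t2 + 1)}"] conjI Gam_intro[of _ _ y x t y2 x2 t2])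
               (simp_all add: sd gamL_def Let_def)
        next
          assume "(x2, x) \<in> snd A"
          then show ?thesis using u' v' Neg Eq
            by (intro exI[of _ "{PL x2 x, PL y x, PL x (y + t + 1), PL y2 x2, PL x2 (y2 + t2 + 1)}"] conjI Gam_intro[of _ _ y x t y2 x2 t2])
               (simp_all add: sd gamL_def Let_def)
        qed
      next
        case True
        then have "y \<noteq> y2" using ne u' v' by auto
        then have "(y, y2) \<in> snd A \<or> (y2, y) \<in> snd A" using tot2[OF u'(2) v'(2)] by auto
        then show ?thesis
        proof
          assume "(y, y2) \<in> snd A"
          then show ?thesis using u' v' Neg Eq \<open>x = x2\<close>
            by (intro exI[of _ "{PL y y2, PL y x, PL x (y + t + 1), PL y2 x, PL x (y2 + t2 + 1)}"] conjI Gam_intro[of _ _ y x t y2 x2 t2])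
               (simp_all add: sd gamL_def Let_def)
        next
          assume "(y2, y) \<in> snd A"
          then show ?thesis using u' v' Neg Eq \<open>x = x2\<close>
            by (intro exI[of _ "{PL y2 y, PL y x, PL x (y + t + 1), PL y2 x, PL x (y2 + t2 + 1)}"] conjI Gam_intro[of _ _ y x t y2 x2 t2])
               (simp_all add: sd gamL_def Let_def)
        qed
      qed
    qed
  qed
qed

lemma enum_Phi:
  assumes A: "slo A"
  shows "enum_apply Wset (diag A) = diag (Phi A)"
proof -
  have st: "snd A \<subseteq> fst A \<times> fst A" and irr: "\<And>a. (a, a) \<notin> snd A" and tr: "trans (snd A)"
    and tot: "\<And>a b. a \<in> fst A \<Longrightarrow> b \<in> fst A \<Longrightarrow> a \<noteq> b \<Longrightarrow> (a, b) \<in> snd A \<or> (b, a) \<in> snd A"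
    using A unfolding slo_def by auto
  have asy: "(a, b) \<in> snd A \<Longrightarrow> (b, a) \<notin> snd A" for a b
  proof
    assume "(a, b) \<in> snd A" "(b, a) \<in> snd A"
    then have "(a, a) \<in> snd A" using transD[OF tr] by blast
    then show False using irr by blast
  qed
  have ea: "enum_apply Wset (diag A) = {\<phi>. \<exists>\<alpha>. \<alpha> \<subseteq> diag A \<and> Gam \<alpha> \<phi>}"
  proof (rule set_eqI)
    fix \<phi>
    show "\<phi> \<in> enum_apply Wset (diag A) \<longleftrightarrow> \<phi> \<in> {\<phi>. \<exists>\<alpha>. \<alpha> \<subseteq> diag A \<and> Gam \<alpha> \<phi>}"
      unfolding enum_apply_def mem_Collect_eq
    proof
      assume "\<exists>\<alpha>. finite \<alpha> \<and> \<alpha> \<subseteq> diag A \<and> pair_code \<alpha> \<phi> \<in> Wset"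
      then obtain \<alpha> where f: "finite \<alpha>" and s: "\<alpha> \<subseteq> diag A" and w: "pair_code \<alpha> \<phi> \<in> Wset" by blast
      have "Gam \<alpha> \<phi>" using W_char[OF f] w by simp
      then show "\<exists>\<alpha>. \<alpha> \<subseteq> diag A \<and> Gam \<alpha> \<phi>" using s by blast
    next
      assume "\<exists>\<alpha>. \<alpha> \<subseteq> diag A \<and> Gam \<alpha> \<phi>"
      then obtain \<alpha> where s: "\<alpha> \<subseteq> diag A" and g: "Gam \<alpha> \<phi>" by blast
      have f: "finite \<alpha>" using Gam_finite[OF g] .
      have "pair_code \<alpha> \<phi> \<in> Wset" using W_char[OF f] g by simp
      then show "\<exists>\<alpha>. finite \<alpha> \<and> \<alpha> \<subseteq> diag A \<and> pair_code \<alpha> \<phi> \<in> Wset"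
        using s f by blast
    qed
  qed
  show ?thesis
  proof (rule set_eqI, rule iffI)
    fix \<phi> assume "\<phi> \<in> enum_apply Wset (diag A)"
    then obtain \<alpha> where sub: "\<alpha> \<subseteq> diag A" and g: "Gam \<alpha> \<phi>" using ea by auto
    from g obtain y x t y2 x2 t2 where mem: "(\<alpha>, \<phi>) \<in> set (gamL y x t y2 x2 t2)"
      unfolding Gam_def by blast
    define z where "z = y + t + 1"
    define z2 where "z2 = y2 + t2 + 1"
    have yz: "y < z" "y2 < z2" unfolding z_def z2_def by auto
    have D: "prod_encode (a, b) \<in> PhiD A" if "(a, b) \<in> snd A" "(b, c) \<in> snd A" "a < c" for a b c
      using that PhiD_enc by blast
    have hD: "holds (Phi A) \<phi>" if "\<phi> \<in> diag (Phi A)" for \<phi> using that unfolding diag_def by simp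
    have s: "(a, b) \<in> snd A" if "PL a b \<in> \<alpha>" for a b
      using that sub sub_diag[OF A] by blast
    let ?e = "prod_encode (y, x)" and ?e2 = "prod_encode (y2, x2)" and ?e3 = "prod_encode (y2, x)"
    have nd: "\<not> (a, b) \<in> snd A" if "(b, a) \<in> snd A" for a b using asy that by blast
    from mem have "\<phi> \<in> diag (Phi A)"
      unfolding gamL_def Let_def z_def[symmetric] z2_def[symmetric] set_simps insert_iff empty_iff prod.inject
    proof (elim disjE conjE)
      assume a: "\<alpha> = {PL y x, PL x z}" and p: "\<phi> = Pos (Eq ?e ?e)"
      have f: "(y, x) \<in> snd A" "(x, z) \<in> snd A" using s a by auto
      have "?e \<in> PhiD A" using D[OF f(1) f(2) yz(1)] by -
      then show ?thesis unfolding p diag_def by (simp add: Phi_def)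
    next
      assume a: "\<alpha> = {PL x x2, PL y x, PL x z, PL y2 x2, PL x2 z2}" and p: "\<phi> = PL ?e ?e2"
      have f: "(x, x2) \<in> snd A" "(y, x) \<in> snd A" "(x, z) \<in> snd A" "(y2, x2) \<in> snd A" "(x2, z2) \<in> snd A" using s a by auto
      have "?e \<in> PhiD A" "?e2 \<in> PhiD A" "(x, x2) \<in> snd A" using D[OF f(2) f(3) yz(1)] D[OF f(4) f(5) yz(2)] f(1) by -
      then show ?thesis unfolding p diag_def by (simp add: Phi_def PhiR_def)
    next
      assume a: "\<alpha> = {PL y y2, PL y x, PL x z, PL y2 x, PL x z2}" and p: "\<phi> = PL ?e ?e3"
      have f: "(y, y2) \<in> snd A" "(y, x) \<in> snd A" "(x, z) \<in> snd A" "(y2, x) \<in> snd A" "(x, z2) \<in> snd A" using s a by auto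
      have "?e \<in> PhiD A" "?e3 \<in> PhiD A" "(y, y2) \<in> snd A" using D[OF f(2) f(3) yz(1)] D[OF f(4) f(5) yz(2)] f(1) by -
      then show ?thesis unfolding p diag_def by (simp add: Phi_def PhiR_def)
    next
      assume a: "\<alpha> = {PL x2 x, PL y x, PL x z, PL y2 x2, PL x2 z2}" and p: "\<phi> = Neg (Lt ?e ?e2)"
      have f: "(x2, x) \<in> snd A" "(y, x) \<in> snd A" "(x, z) \<in> snd A" "(y2, x2) \<in> snd A" "(x2, z2) \<in> snd A" using s a by auto
      have "?e \<in> PhiD A" "?e2 \<in> PhiD A" "(x2, x) \<in> snd A" using D[OF f(2) f(3) yz(1)] D[OF f(4) f(5) yz(2)] f(1) by -
      moreover have "x \<noteq> x2" using \<open>(x2, x) \<in> snd A\<close> irr by auto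
      ultimately show ?thesis unfolding p diag_def using nd[of x x2] by (simp add: Phi_def PhiR_def) blast
    next
      assume a: "\<alpha> = {PL y2 y, PL y x, PL x z, PL y2 x, PL x z2}" and p: "\<phi> = Neg (Lt ?e ?e3)"
      have f: "(y2, y) \<in> snd A" "(y, x) \<in> snd A" "(x, z) \<in> snd A" "(y2, x) \<in> snd A" "(x, z2) \<in> snd A" using s a by auto
      have "?e \<in> PhiD A" "?e3 \<in> PhiD A" "(y2, y) \<in> snd A" using D[OF f(2) f(3) yz(1)] D[OF f(4) f(5) yz(2)] f(1) by -
      then show ?thesis unfolding p diag_def using nd[of y y2] irr by (simp add: Phi_def PhiR_def) blast
    next
      assume a: "\<alpha> = {PL y x, PL x z}" and p: "\<phi> = Neg (Lt ?e ?e)"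
      have f: "(y, x) \<in> snd A" "(x, z) \<in> snd A" using s a by auto
      have "?e \<in> PhiD A" using D[OF f(1) f(2) yz(1)] by -
      then show ?thesis unfolding p diag_def using irr by (simp add: Phi_def PhiR_def)
    next
      assume a: "\<alpha> = {PL x x2, PL y x, PL x z, PL y2 x2, PL x2 z2}" and p: "\<phi> = Neg (Eq ?e ?e2)"
      have f: "(x, x2) \<in> snd A" "(y, x) \<in> snd A" "(x, z) \<in> snd A" "(y2, x2) \<in> snd A" "(x2, z2) \<in> snd A" using s a by auto
      have "?e \<in> PhiD A" "?e2 \<in> PhiD A" "(x, x2) \<in> snd A" using D[OF f(2) f(3) yz(1)] D[OF f(4) f(5) yz(2)] f(1) by -
      moreover have "x \<noteq> x2" using \<open>(x, x2) \<in> snd A\<close> irr by auto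
      ultimately show ?thesis unfolding p diag_def by (simp add: Phi_def)
    next
      assume a: "\<alpha> = {PL y y2, PL y x, PL x z, PL y2 x, PL x z2}" and p: "\<phi> = Neg (Eq ?e ?e3)"
      have f: "(y, y2) \<in> snd A" "(y, x) \<in> snd A" "(x, z) \<in> snd A" "(y2, x) \<in> snd A" "(x, z2) \<in> snd A" using s a by auto
      have "?e \<in> PhiD A" "?e3 \<in> PhiD A" "(y, y2) \<in> snd A" using D[OF f(2) f(3) yz(1)] D[OF f(4) f(5) yz(2)] f(1) by -
      moreover have "y \<noteq> y2" using \<open>(y, y2) \<in> snd A\<close> irr by auto
      ultimately show ?thesis unfolding p diag_def by (simp add: Phi_def)
    next
      assume a: "\<alpha> = {PL x2 x, PL y x, PL x z, PL y2 x2, PL x2 z2}" and p: "\<phi> = Neg (Eq ?e ?e2)"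
      have f: "(x2, x) \<in> snd A" "(y, x) \<in> snd A" "(x, z) \<in> snd A" "(y2, x2) \<in> snd A" "(x2, z2) \<in> snd A" using s a by auto
      have "?e \<in> PhiD A" "?e2 \<in> PhiD A" "(x2, x) \<in> snd A" using D[OF f(2) f(3) yz(1)] D[OF f(4) f(5) yz(2)] f(1) by -
      moreover have "x \<noteq> x2" using \<open>(x2, x) \<in> snd A\<close> irr by auto
      ultimately show ?thesis unfolding p diag_def by (simp add: Phi_def)
    next
      assume a: "\<alpha> = {PL y2 y, PL y x, PL x z, PL y2 x, PL x z2}" and p: "\<phi> = Neg (Eq ?e ?e3)"
      have f: "(y2, y) \<in> snd A" "(y, x) \<in> snd A" "(x, z) \<in> snd A" "(y2, x) \<in> snd A" "(x, z2) \<in> snd A" using s a by auto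
      have "?e \<in> PhiD A" "?e3 \<in> PhiD A" "(y2, y) \<in> snd A" using D[OF f(2) f(3) yz(1)] D[OF f(4) f(5) yz(2)] f(1) by -
      moreover have "y \<noteq> y2" using \<open>(y2, y) \<in> snd A\<close> irr by auto
      ultimately show ?thesis unfolding p diag_def by (simp add: Phi_def)
    next
      assume False then show ?thesis ..
    qed
    then show "\<phi> \<in> diag (Phi A)" .
  next
    fix \<phi> assume "\<phi> \<in> diag (Phi A)"
    then have "holds (Phi A) \<phi>" unfolding diag_def by simp
    then show "\<phi> \<in> enum_apply Wset (diag A)" using enum_sup[OF A] ea by blast
  qed
qed

lemma omega_count:
  fixes S :: "'a set" and R :: "('a \<times> 'a) set"
  defines "cnt \<equiv> \<lambda>a. card {b\<in>S. (b, a) \<in> R}"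
  assumes inf: "infinite S"
    and irr: "\<And>a. a \<in> S \<Longrightarrow> (a, a) \<notin> R"
    and tr: "\<And>a b c. a \<in> S \<Longrightarrow> b \<in> S \<Longrightarrow> c \<in> S \<Longrightarrow> (a, b) \<in> R \<Longrightarrow> (b, c) \<in> R \<Longrightarrow> (a, c) \<in> R"
    and tot: "\<And>a b. a \<in> S \<Longrightarrow> b \<in> S \<Longrightarrow> a \<noteq> b \<Longrightarrow> (a, b) \<in> R \<or> (b, a) \<in> R"
    and fin: "\<And>a. a \<in> S \<Longrightarrow> finite {b\<in>S. (b, a) \<in> R}"
  shows "bij_betw cnt S UNIV" and "\<And>a b. a \<in> S \<Longrightarrow> b \<in> S \<Longrightarrow> (a, b) \<in> R \<longleftrightarrow> cnt a < cnt b"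
proof -
  have lt: "cnt a < cnt b" if "a \<in> S" "b \<in> S" "(a, b) \<in> R" for a b
  proof -
    have "{c\<in>S. (c, a) \<in> R} \<subset> {c\<in>S. (c, b) \<in> R}"
      using that tr irr by blast
    then show ?thesis unfolding cnt_def using fin[OF that(2)] by (rule psubset_card_mono[rotated])
  qed
  have iff: "(a, b) \<in> R \<longleftrightarrow> cnt a < cnt b" if "a \<in> S" "b \<in> S" for a b
  proof
    assume "cnt a < cnt b"
    show "(a, b) \<in> R"
    proof (rule ccontr)
      assume "(a, b) \<notin> R"
      then have "a = b \<or> (b, a) \<in> R" using tot that by blast
      then show False using lt that \<open>cnt a < cnt b\<close> by fastforce
    qed
  qed (use lt that in blast)
  then show "\<And>a b. a \<in> S \<Longrightarrow> b \<in> S \<Longrightarrow> (a, b) \<in> R \<longleftrightarrow> cnt a < cnt b" .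
  have inj: "inj_on cnt S"
  proof (rule inj_onI)
    fix a b assume "a \<in> S" "b \<in> S" "cnt a = cnt b"
    then show "a = b" using tot lt by (metis less_irrefl)
  qed
  have down: "m \<in> cnt ` S" if "a \<in> S" "m < cnt a" for a m
  proof -
    let ?P = "{b\<in>S. (b, a) \<in> R}"
    have sub: "cnt ` ?P \<subseteq> {..<cnt a}" using lt that(1) by auto
    have "card (cnt ` ?P) = cnt a"
      using inj_on_subset[OF inj, of ?P] by (simp add: card_image cnt_def)
    then have "cnt ` ?P = {..<cnt a}"
      using sub by (intro card_subset_eq) auto
    then show ?thesis using that(2) by blast
  qed
  have "infinite (cnt ` S)" using inj inf finite_imageD by blast
  have "n \<in> cnt ` S" for n
  proof -
    have "\<not> cnt ` S \<subseteq> {..<n}" using \<open>infinite (cnt ` S)\<close> finite_subset by blast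
    then obtain a where a: "a \<in> S" "n \<le> cnt a" by force
    then show ?thesis using down by (cases "n = cnt a") auto
  qed
  then show "bij_betw cnt S UNIV" using inj unfolding bij_betw_def by auto
qed

lemma iso_omega_squared:
  fixes D :: "nat set" and R :: "(nat \<times> nat) set" and h :: "nat \<Rightarrow> nat"
  assumes st: "R \<subseteq> D \<times> D"
    and irr: "\<And>a. (a, a) \<notin> R"
    and tr: "trans R"
    and tot: "\<And>a b. a \<in> D \<Longrightarrow> b \<in> D \<Longrightarrow> a \<noteq> b \<Longrightarrow> (a, b) \<in> R \<or> (b, a) \<in> R"
    and mono: "\<And>a b. (a, b) \<in> R \<Longrightarrow> h a \<le> h b"
    and inf: "\<And>n. infinite {a\<in>D. h a = n}"
    and fin: "\<And>a. a \<in> D \<Longrightarrow> finite {b\<in>D. h b = h a \<and> (b, a) \<in> R}"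
  shows "iso (D, R) omega_squared"
proof -
  define F where "F n = {a\<in>D. h a = n}" for n
  define c where "c n a = card {b\<in>F n. (b, a) \<in> R}" for n a
  have trF: "(a, c') \<in> R" if "(a, b) \<in> R" "(b, c') \<in> R" for a b c'
    using tr that by (meson transD)
  have fin': "finite {b\<in>F n. (b, a) \<in> R}" if "a \<in> F n" for a n
  proof -
    have "{b\<in>F n. (b, a) \<in> R} = {b\<in>D. h b = h a \<and> (b, a) \<in> R}" using that unfolding F_def by auto
    then show ?thesis using fin[of a] that unfolding F_def by simp
  qed
  have cF: "bij_betw (c n) (F n) UNIV" for n
    unfolding c_def by (rule omega_count(1)[of "F n" R, OF _ irr trF tot fin']) (use inf[of n] F_def in auto)
  have oF: "(a, b) \<in> R \<longleftrightarrow> c n a < c n b" if "a \<in> F n" "b \<in> F n" for a b n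
    unfolding c_def by (rule omega_count(2)[of "F n" R, OF _ irr trF tot fin']) (use inf[of n] F_def that in auto)
  define g where "g a = prod_encode (h a, c (h a) a)" for a
  have inFh: "a \<in> F (h a)" if "a \<in> D" for a using that unfolding F_def by simp
  have inj: "inj_on g D"
  proof (rule inj_onI)
    fix a b assume ab: "a \<in> D" "b \<in> D" "g a = g b"
    then have hh: "h a = h b" and cc: "c (h a) a = c (h a) b" unfolding g_def by auto
    have "b \<in> F (h a)" using inFh[OF ab(2)] hh by simp
    then show "a = b" using bij_betw_imp_inj_on[OF cF[of "h a"]] inFh[OF ab(1)] cc
      by (meson inj_onD)
  qed
  have surj: "k \<in> g ` D" for k
  proof -
    obtain n j where k: "prod_decode k = (n, j)" by (cases "prod_decode k")
    have "j \<in> c n ` F n" using cF[of n] unfolding bij_betw_def by auto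
    then obtain a where a: "a \<in> F n" "c n a = j" by auto
    then have "a \<in> D" "h a = n" unfolding F_def by auto
    then have "g a = k" unfolding g_def using a k by (metis prod_decode_inverse)
    then show ?thesis using \<open>a \<in> D\<close> by blast
  qed
  have ord: "(a, b) \<in> R \<longleftrightarrow> (g a, g b) \<in> snd omega_squared" if "a \<in> D" "b \<in> D" for a b
  proof -
    have "(a, b) \<in> R \<longleftrightarrow> h a < h b \<or> (h a = h b \<and> c (h a) a < c (h a) b)"
    proof
      assume r: "(a, b) \<in> R"
      then have "h a \<le> h b" by (rule mono)
      moreover have "c (h a) a < c (h a) b" if "h a = h b"
        using oF[of a "h a" b] inFh[of a] inFh[of b] \<open>a \<in> D\<close> \<open>b \<in> D\<close> r that by simp
      ultimately show "h a < h b \<or> (h a = h b \<and> c (h a) a < c (h a) b)" by linarith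
    next
      assume q: "h a < h b \<or> (h a = h b \<and> c (h a) a < c (h a) b)"
      show "(a, b) \<in> R"
      proof (rule ccontr)
        assume nr: "(a, b) \<notin> R"
        show False
        proof (cases "a = b")
          case True then show False using q by auto
        next
          case False
          then have "(b, a) \<in> R" using tot that nr by blast
          then have "h b \<le> h a" by (rule mono)
          then have "h a = h b" "c (h a) a < c (h a) b" using q by auto
          moreover have "c (h a) b < c (h a) a"
            using oF[of b "h a" a] inFh[of a] inFh[of b] that \<open>(b, a) \<in> R\<close> \<open>h a = h b\<close> by simp
          ultimately show False by simp
        qed
      qed
    qed
    then show ?thesis unfolding g_def omega_squared_def by auto
  qed
  show ?thesis unfolding iso_def
    using inj surj ord by (intro exI[of _ g]) (auto simp: bij_betw_def omega_squared_def)
qed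

lemma Phi_order:
  assumes A: "slo A"
  shows "PhiR A \<subseteq> PhiD A \<times> PhiD A" "\<And>e. (e, e) \<notin> PhiR A" "trans (PhiR A)"
    "\<And>e e'. e \<in> PhiD A \<Longrightarrow> e' \<in> PhiD A \<Longrightarrow> e \<noteq> e' \<Longrightarrow> (e, e') \<in> PhiR A \<or> (e', e) \<in> PhiR A"
proof -
  have st: "snd A \<subseteq> fst A \<times> fst A" and irr: "\<And>a. (a, a) \<notin> snd A" and tr: "trans (snd A)"
    and tot: "\<And>a b. a \<in> fst A \<Longrightarrow> b \<in> fst A \<Longrightarrow> a \<noteq> b \<Longrightarrow> (a, b) \<in> snd A \<or> (b, a) \<in> snd A"
    using A unfolding slo_def by auto
  have trr: "(a, c) \<in> snd A" if "(a, b) \<in> snd A" "(b, c) \<in> snd A" for a b c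
    using tr that by (meson transD)
  show "PhiR A \<subseteq> PhiD A \<times> PhiD A" unfolding PhiR_def by auto
  show "\<And>e. (e, e) \<notin> PhiR A" unfolding PhiR_def using irr by auto
  show "trans (PhiR A)"
  proof (rule transI)
    fix e1 e2 e3 assume "(e1, e2) \<in> PhiR A" "(e2, e3) \<in> PhiR A"
    then show "(e1, e3) \<in> PhiR A" unfolding PhiR_def using trr by auto
  qed
  fix e e' assume e: "e \<in> PhiD A" "e' \<in> PhiD A" "e \<noteq> e'"
  have "dx e \<in> fst A" "dy e \<in> fst A" "dx e' \<in> fst A" "dy e' \<in> fst A"
    using e st unfolding PhiD_def by auto
  moreover have "dx e \<noteq> dx e' \<or> dy e \<noteq> dy e'" using e enc_d by metis
  ultimately show "(e, e') \<in> PhiR A \<or> (e', e) \<in> PhiR A"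
    unfolding PhiR_def using e tot by auto
qed

lemma inf_gt: "infinite (T :: nat set) \<Longrightarrow> \<exists>z\<in>T. y < z"
proof (rule ccontr)
  assume "infinite T" "\<not> (\<exists>z\<in>T. y < z)"
  then have "T \<subseteq> {..y}" by auto
  then show False using \<open>infinite T\<close> finite_subset by blast
qed

lemma inf_range: "inj (\<phi> :: nat \<Rightarrow> nat) \<Longrightarrow> range \<phi> \<subseteq> T \<Longrightarrow> infinite T"
proof
  assume "inj \<phi>" "range \<phi> \<subseteq> T" "finite T"
  then have "finite (range \<phi>)" using finite_subset by blast
  then have "finite (UNIV :: nat set)" using \<open>inj \<phi>\<close> finite_imageD by blast
  then show False by simp
qed

definition ltb :: "bool \<Rightarrow> nat \<Rightarrow> bool \<Rightarrow> nat \<Rightarrow> bool" where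
  "ltb c p c' p' \<longleftrightarrow> (\<not> c \<and> c') \<or> (c = c' \<and> p < p')"
definition Hb :: "bool \<Rightarrow> nat \<Rightarrow> bool \<Rightarrow> nat \<Rightarrow> nat" where
  "Hb cy py cx px = (if \<not> cx then 0 else if \<not> cy then px + 1 else px + 2)"
definition vb :: "bool \<Rightarrow> nat \<Rightarrow> nat" where "vb c p = 2 * p + (if c then 1 else 0)"

lemma ar_mono: "ltb cy py cx px \<Longrightarrow> ltb cy' py' cx' px' \<Longrightarrow> ltb cx px cx' px' \<or> (cx = cx' \<and> px = px' \<and> ltb cy py cy' py') \<Longrightarrow> Hb cy py cx px \<le> Hb cy' py' cx' px'"
  unfolding ltb_def Hb_def by (cases cy; cases cx; cases cy'; cases cx') auto

lemma ar_fin: "ltb cy py cx px \<Longrightarrow> ltb cy' py' cx' px' \<Longrightarrow> ltb cx' px' cx px \<or> (cx' = cx \<and> px' = px \<and> ltb cy' py' cy py) \<Longrightarrow> Hb cy' py' cx' px' = Hb cy py cx px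
   \<Longrightarrow> vb cy' py' \<le> vb cx px + vb cy py \<and> vb cx' px' \<le> vb cx px + vb cy py"
  unfolding ltb_def Hb_def vb_def by (cases cy; cases cx; cases cy'; cases cx') auto

lemma m2a: "(m::nat) mod 2 < n mod 2 \<longleftrightarrow> even m \<and> odd n"
  by (cases "even m"; cases "even n") (auto simp: even_iff_mod_2_eq_zero odd_iff_mod_2_eq_one)
lemma m2b: "(m::nat) mod 2 = n mod 2 \<longleftrightarrow> (odd m \<longleftrightarrow> odd n)"
  by (cases "even m"; cases "even n") (auto simp: even_iff_mod_2_eq_zero odd_iff_mod_2_eq_one)
lemma fv: "(n::nat) = 2 * (n div 2) + (if odd n then 1 else 0)"
  using div_mult_mod_eq[of n 2] by (auto simp: odd_iff_mod_2_eq_one even_iff_mod_2_eq_zero)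

context
  fixes A :: struc and f :: "nat \<Rightarrow> nat"
  assumes st: "snd A \<subseteq> fst A \<times> fst A"
    and bij: "bij_betw f (fst A) UNIV"
    and ord: "\<And>a b. a \<in> fst A \<Longrightarrow> b \<in> fst A \<Longrightarrow> (a, b) \<in> snd A \<longleftrightarrow> (f a, f b) \<in> snd omega_times_2"
begin

definition "cA a = odd (f a)"
definition "pA a = f a div 2"
definition "finv = inv_into (fst A) f"

lemma f_val: "f a = vb (cA a) (pA a)"
  unfolding vb_def cA_def pA_def by (rule fv)

lemma L_iff: "(a, b) \<in> snd A \<longleftrightarrow> a \<in> fst A \<and> b \<in> fst A \<and> ltb (cA a) (pA a) (cA b) (pA b)"
proof -
  have "(f a, f b) \<in> snd omega_times_2 \<longleftrightarrow> ltb (cA a) (pA a) (cA b) (pA b)"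
    unfolding omega_times_2_def ltb_def cA_def pA_def by (simp add: m2a m2b)
  then show ?thesis using ord st by blast
qed

lemma finv: "finv n \<in> fst A" "f (finv n) = n"
  unfolding finv_def using bij by (auto simp: bij_betw_def inv_into_into f_inv_into_f)

lemma finv_inj: "finv m = finv n \<longleftrightarrow> m = n"
  by (metis finv(2))

lemma finv_f: "a \<in> fst A \<Longrightarrow> finv (f a) = a"
  unfolding finv_def using bij by (simp add: bij_betw_def)

lemma cp_finv: "cA (finv n) = odd n" "pA (finv n) = n div 2"
  unfolding cA_def pA_def finv(2) by simp_all

lemma slo_A: "slo A"
  unfolding slo_def
proof (intro conjI ballI allI impI)
  show "snd A \<subseteq> fst A \<times> fst A" by (rule st)
  show "(a, a) \<notin> snd A" for a unfolding L_iff ltb_def by auto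
  show "trans (snd A)" unfolding trans_def L_iff ltb_def by auto
  fix a b assume ab: "a \<in> fst A" "b \<in> fst A" "a \<noteq> b"
  then have "f a \<noteq> f b" using bij by (metis finv_f)
  then have "cA a \<noteq> cA b \<or> pA a \<noteq> pA b"
    using f_val[of a] f_val[of b] by (cases "cA a = cA b"; cases "pA a = pA b") auto
  then show "(a, b) \<in> snd A \<or> (b, a) \<in> snd A" unfolding L_iff ltb_def using ab by auto
qed

lemma succ_big: "x \<in> fst A \<Longrightarrow> \<exists>z. (x, z) \<in> snd A \<and> y < z"
proof -
  assume x: "x \<in> fst A"
  let ?\<phi> = "\<lambda>i. finv (2 * (pA x + i + 1) + 1)"
  have "inj ?\<phi>" by (rule injI) (simp add: finv_inj)
  moreover have "range ?\<phi> \<subseteq> {z. (x, z) \<in> snd A}"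
    using x by (auto simp: L_iff finv cp_finv ltb_def)
  ultimately have "infinite {z. (x, z) \<in> snd A}" by (rule inf_range)
  then show ?thesis using inf_gt by blast
qed

lemma PhiD_iff: "e \<in> PhiD A \<longleftrightarrow> (dy e, dx e) \<in> snd A"
  unfolding PhiD_def using succ_big st by blast

definition "h2 e = Hb (cA (dy e)) (pA (dy e)) (cA (dx e)) (pA (dx e))"

lemma Phi_w2: "iso (Phi A) omega_squared"
  unfolding Phi_def
proof (rule iso_omega_squared[where h = h2])
  show "PhiR A \<subseteq> PhiD A \<times> PhiD A" "\<And>a. (a, a) \<notin> PhiR A" "trans (PhiR A)"
    "\<And>a b. a \<in> PhiD A \<Longrightarrow> b \<in> PhiD A \<Longrightarrow> a \<noteq> b \<Longrightarrow> (a, b) \<in> PhiR A \<or> (b, a) \<in> PhiR A"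
    using Phi_order[OF slo_A] by auto
next
  fix a b assume "(a, b) \<in> PhiR A"
  then have "ltb (cA (dy a)) (pA (dy a)) (cA (dx a)) (pA (dx a))"
     "ltb (cA (dy b)) (pA (dy b)) (cA (dx b)) (pA (dx b))"
     "ltb (cA (dx a)) (pA (dx a)) (cA (dx b)) (pA (dx b)) \<or> (cA (dx a) = cA (dx b) \<and> pA (dx a) = pA (dx b) \<and> ltb (cA (dy a)) (pA (dy a)) (cA (dy b)) (pA (dy b)))"
    unfolding PhiR_def PhiD_iff L_iff by auto
  then show "h2 a \<le> h2 b" unfolding h2_def by (rule ar_mono)
next
  fix n
  show "infinite {a \<in> PhiD A. h2 a = n}"
  proof (cases n)
    case 0
    let ?\<phi> = "\<lambda>j. prod_encode (finv 0, finv (2 * j + 2))"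
    have "inj ?\<phi>" by (rule injI) (simp add: finv_inj)
    moreover have "range ?\<phi> \<subseteq> {a \<in> PhiD A. h2 a = n}"
      using 0 by (auto simp: PhiD_iff L_iff finv cp_finv ltb_def h2_def Hb_def)
    ultimately show ?thesis by (rule inf_range)
  next
    case (Suc k)
    let ?\<phi> = "\<lambda>j. prod_encode (finv (2 * j), finv (2 * k + 1))"
    have "inj ?\<phi>" by (rule injI) (simp add: finv_inj)
    moreover have "range ?\<phi> \<subseteq> {a \<in> PhiD A. h2 a = n}"
      using Suc by (auto simp: PhiD_iff L_iff finv cp_finv ltb_def h2_def Hb_def)
    ultimately show ?thesis by (rule inf_range)
  qed
next
  fix e assume e: "e \<in> PhiD A"
  define T where "T = {a \<in> fst A. f a \<le> f (dx e) + f (dy e)}"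
  have finT: "finite T"
  proof -
    have "T \<subseteq> finv ` {..f (dx e) + f (dy e)}"
      unfolding T_def using finv_f by force
    then show ?thesis using finite_subset by blast
  qed
  have "{b \<in> PhiD A. h2 b = h2 e \<and> (b, e) \<in> PhiR A} \<subseteq> (\<lambda>(p, q). prod_encode (p, q)) ` (T \<times> T)"
  proof
    fix b assume b: "b \<in> {b \<in> PhiD A. h2 b = h2 e \<and> (b, e) \<in> PhiR A}"
    then have l: "ltb (cA (dy e)) (pA (dy e)) (cA (dx e)) (pA (dx e))"
     "ltb (cA (dy b)) (pA (dy b)) (cA (dx b)) (pA (dx b))"
     "ltb (cA (dx b)) (pA (dx b)) (cA (dx e)) (pA (dx e)) \<or> (cA (dx b) = cA (dx e) \<and> pA (dx b) = pA (dx e) \<and> ltb (cA (dy b)) (pA (dy b)) (cA (dy e)) (pA (dy e)))"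
     "Hb (cA (dy b)) (pA (dy b)) (cA (dx b)) (pA (dx b)) = Hb (cA (dy e)) (pA (dy e)) (cA (dx e)) (pA (dx e))"
      unfolding PhiR_def PhiD_iff L_iff h2_def by auto
    have "f (dy b) \<le> f (dx e) + f (dy e) \<and> f (dx b) \<le> f (dx e) + f (dy e)"
      using ar_fin[OF l] f_val[of "dy b"] f_val[of "dx b"] f_val[of "dx e"] f_val[of "dy e"] by metis
    moreover have "dy b \<in> fst A" "dx b \<in> fst A" using b st unfolding PhiD_iff by auto
    ultimately have "dy b \<in> T" "dx b \<in> T" unfolding T_def by auto
    then show "b \<in> (\<lambda>(p, q). prod_encode (p, q)) ` (T \<times> T)"
      using enc_d[of b] by force
  qed
  then show "finite {b \<in> PhiD A. h2 b = h2 e \<and> (b, e) \<in> PhiR A}"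
    using finT finite_subset by blast
qed

end

definition ltS :: "bool \<Rightarrow> nat \<Rightarrow> bool \<Rightarrow> nat \<Rightarrow> bool" where
  "ltS c p c' p' \<longleftrightarrow> (\<not> c \<and> c') \<or> (c = c' \<and> p' < p)"
definition HS :: "bool \<Rightarrow> nat \<Rightarrow> nat" where
  "HS cx px = (if cx then 0 else px + 1)"

lemma iso_conv: "iso (D, R\<inverse>) L \<Longrightarrow> iso (D, R) (rev_order L)"
  unfolding iso_def rev_order_def by auto

context
  fixes A :: struc and f :: "nat \<Rightarrow> nat"
  assumes st: "snd A \<subseteq> fst A \<times> fst A"
    and bij: "bij_betw f (fst A) UNIV"
    and ord: "\<And>a b. a \<in> fst A \<Longrightarrow> b \<in> fst A \<Longrightarrow> (a, b) \<in> snd A \<longleftrightarrow> (f a, f b) \<in> snd omega_star_times_2"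
begin

definition "cS a = odd (f a)"
definition "pS a = f a div 2"
definition "finvS = inv_into (fst A) f"

lemma f_valS: "f a = vb (cS a) (pS a)"
  unfolding vb_def cS_def pS_def by (rule fv)

lemma LS_iff: "(a, b) \<in> snd A \<longleftrightarrow> a \<in> fst A \<and> b \<in> fst A \<and> ltS (cS a) (pS a) (cS b) (pS b)"
proof -
  have "(f a, f b) \<in> snd omega_star_times_2 \<longleftrightarrow> ltS (cS a) (pS a) (cS b) (pS b)"
    unfolding omega_star_times_2_def ltS_def cS_def pS_def by (simp add: m2a m2b)
  then show ?thesis using ord st by blast
qed

lemma finvS: "finvS n \<in> fst A" "f (finvS n) = n"
  unfolding finvS_def using bij by (auto simp: bij_betw_def inv_into_into f_inv_into_f)

lemma finvS_inj: "finvS m = finvS n \<longleftrightarrow> m = n"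
  by (metis finvS(2))

lemma finvS_f: "a \<in> fst A \<Longrightarrow> finvS (f a) = a"
  unfolding finvS_def using bij by (simp add: bij_betw_def)

lemma cp_finvS: "cS (finvS n) = odd n" "pS (finvS n) = n div 2"
  unfolding cS_def pS_def finvS(2) by simp_all

lemma f_injS: "a \<in> fst A \<Longrightarrow> b \<in> fst A \<Longrightarrow> f a = f b \<Longrightarrow> a = b"
  by (metis finvS_f)

lemma slo_AS: "slo A"
  unfolding slo_def
proof (intro conjI ballI allI impI)
  show "snd A \<subseteq> fst A \<times> fst A" by (rule st)
  show "(a, a) \<notin> snd A" for a unfolding LS_iff ltS_def by auto
  show "trans (snd A)" unfolding trans_def LS_iff ltS_def by auto
  fix a b assume ab: "a \<in> fst A" "b \<in> fst A" "a \<noteq> b"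
  then have "f a \<noteq> f b" using f_injS by blast
  then have "cS a \<noteq> cS b \<or> pS a \<noteq> pS b"
    using f_valS[of a] f_valS[of b] by (cases "cS a = cS b"; cases "pS a = pS b") auto
  then show "(a, b) \<in> snd A \<or> (b, a) \<in> snd A" unfolding LS_iff ltS_def using ab by auto
qed

lemma succ_bigS: "x \<in> fst A \<Longrightarrow> \<not> cS x \<Longrightarrow> \<exists>z. (x, z) \<in> snd A \<and> y < z"
proof -
  assume x: "x \<in> fst A" "\<not> cS x"
  let ?\<phi> = "\<lambda>i. finvS (2 * i + 1)"
  have "inj ?\<phi>" by (rule injI) (simp add: finvS_inj)
  moreover have "range ?\<phi> \<subseteq> {z. (x, z) \<in> snd A}"
    using x by (auto simp: LS_iff finvS cp_finvS ltS_def)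
  ultimately have "infinite {z. (x, z) \<in> snd A}" by (rule inf_range)
  then show ?thesis using inf_gt by blast
qed

lemma succ_finS: "Suc y < J \<Longrightarrow> J \<le> j \<Longrightarrow> \<exists>z. (finvS (2 * j + 1), z) \<in> snd A \<and> (y::nat) < z"
proof (rule ccontr)
  assume yJ: "Suc y < J" "J \<le> j" and no: "\<not> (\<exists>z. (finvS (2 * j + 1), z) \<in> snd A \<and> y < z)"
  let ?\<phi> = "\<lambda>i. finvS (2 * i + 1)"
  have sub: "?\<phi> ` {..<j} \<subseteq> {..y}"
  proof
    fix z assume "z \<in> ?\<phi> ` {..<j}"
    then obtain i where i: "i < j" "z = ?\<phi> i" by auto
    then have "(finvS (2 * j + 1), z) \<in> snd A" by (auto simp: LS_iff finvS cp_finvS ltS_def)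
    then show "z \<in> {..y}" using no by auto
  qed
  have "inj_on ?\<phi> {..<j}" by (rule inj_onI) (simp add: finvS_inj)
  then have "card (?\<phi> ` {..<j}) = j" by (simp add: card_image)
  moreover have "card (?\<phi> ` {..<j}) \<le> card {..y}" using sub by (intro card_mono) auto
  ultimately show False using yJ by simp
qed

lemma PhiD_iffS: "e \<in> PhiD A \<longleftrightarrow> (dy e, dx e) \<in> snd A \<and> (\<exists>z. (dx e, z) \<in> snd A \<and> dy e < z)"
  unfolding PhiD_def by blast

definition "h3 e = HS (cS (dx e)) (pS (dx e))"

lemma Phi_w2s: "iso (Phi A) (rev_order omega_squared)"
  unfolding Phi_def
proof (rule iso_conv, rule iso_omega_squared[where h = h3])
  have o: "PhiR A \<subseteq> PhiD A \<times> PhiD A" "\<And>a. (a, a) \<notin> PhiR A" "trans (PhiR A)"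
    "\<And>a b. a \<in> PhiD A \<Longrightarrow> b \<in> PhiD A \<Longrightarrow> a \<noteq> b \<Longrightarrow> (a, b) \<in> PhiR A \<or> (b, a) \<in> PhiR A"
    using Phi_order[OF slo_AS] by auto
  show "(PhiR A)\<inverse> \<subseteq> PhiD A \<times> PhiD A" "\<And>a. (a, a) \<notin> (PhiR A)\<inverse>" "trans ((PhiR A)\<inverse>)"
    "\<And>a b. a \<in> PhiD A \<Longrightarrow> b \<in> PhiD A \<Longrightarrow> a \<noteq> b \<Longrightarrow> (a, b) \<in> (PhiR A)\<inverse> \<or> (b, a) \<in> (PhiR A)\<inverse>"
    using o unfolding trans_def by blast+
next
  fix a b assume "(a, b) \<in> (PhiR A)\<inverse>"
  then have "ltS (cS (dx b)) (pS (dx b)) (cS (dx a)) (pS (dx a)) \<or> (dx b = dx a)"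
    unfolding PhiR_def PhiD_def LS_iff by auto
  then show "h3 a \<le> h3 b" unfolding h3_def HS_def ltS_def by auto
next
  fix n
  show "infinite {a \<in> PhiD A. h3 a = n}"
  proof (cases n)
    case 0
    define y0 where "y0 = finvS 0"
    let ?\<phi> = "\<lambda>j. prod_encode (y0, finvS (2 * (j + y0 + 2) + 1))"
    have "inj ?\<phi>" by (rule injI) (simp add: finvS_inj)
    moreover have "range ?\<phi> \<subseteq> {a \<in> PhiD A. h3 a = n}"
    proof
      fix e assume "e \<in> range ?\<phi>"
      then obtain j where e: "e = ?\<phi> j" by auto
      have "\<exists>z. (finvS (2 * (j + y0 + 2) + 1), z) \<in> snd A \<and> y0 < z"
        by (rule succ_finS[of y0 "y0 + 2"]) auto
      then show "e \<in> {a \<in> PhiD A. h3 a = n}"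
        using 0 e unfolding y0_def
        by (auto simp: PhiD_iffS LS_iff finvS cp_finvS ltS_def h3_def HS_def)
    qed
    ultimately show ?thesis by (rule inf_range)
  next
    case (Suc k)
    let ?\<phi> = "\<lambda>j. prod_encode (finvS (2 * (k + 1 + j)), finvS (2 * k))"
    have "inj ?\<phi>" by (rule injI) (simp add: finvS_inj)
    moreover have "range ?\<phi> \<subseteq> {a \<in> PhiD A. h3 a = n}"
    proof
      fix e assume "e \<in> range ?\<phi>"
      then obtain j where e: "e = ?\<phi> j" by auto
      have "\<exists>z. (finvS (2 * k), z) \<in> snd A \<and> finvS (2 * (k + 1 + j)) < z"
        by (rule succ_bigS) (auto simp: finvS cp_finvS)
      then show "e \<in> {a \<in> PhiD A. h3 a = n}"
        using Suc e
        by (auto simp: PhiD_iffS LS_iff finvS cp_finvS ltS_def h3_def HS_def)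
    qed
    ultimately show ?thesis by (rule inf_range)
  qed
next
  fix e assume e: "e \<in> PhiD A"
  define T where "T = {a \<in> fst A. f a \<le> f (dx e)}"
  define T' where "T' = {a \<in> fst A. f a \<le> f (dy e)}"
  have finT: "finite T" "finite T'"
  proof -
    have "T \<subseteq> finvS ` {..f (dx e)}" unfolding T_def using finvS_f by force
    then show "finite T" using finite_subset by blast
    have "T' \<subseteq> finvS ` {..f (dy e)}" unfolding T'_def using finvS_f by force
    then show "finite T'" using finite_subset by blast
  qed
  have exS: "dx e \<in> fst A" "dy e \<in> fst A" using e st unfolding PhiD_def by auto
  have "{b \<in> PhiD A. h3 b = h3 e \<and> (b, e) \<in> (PhiR A)\<inverse>} \<subseteq> (\<lambda>(p, q). prod_encode (p, q)) ` (({..Max T} \<union> T') \<times> T)"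
  proof
    fix b assume b: "b \<in> {b \<in> PhiD A. h3 b = h3 e \<and> (b, e) \<in> (PhiR A)\<inverse>}"
    then have bD: "b \<in> PhiD A" and hb: "h3 b = h3 e" and r: "(e, b) \<in> PhiR A" by auto
    obtain z where z: "(dx b, z) \<in> snd A" "dy b < z" and yx: "(dy b, dx b) \<in> snd A"
      using bD unfolding PhiD_def by auto
    have yxe: "(dy e, dx e) \<in> snd A" using e unfolding PhiD_def by auto
    have rr: "(dx e, dx b) \<in> snd A \<or> (dx e = dx b \<and> (dy e, dy b) \<in> snd A)"
      using r unfolding PhiR_def by auto
    have "dy b \<in> {..Max T} \<union> T' \<and> dx b \<in> T"
    proof (cases "cS (dx e)")
      case True
      then have cb: "cS (dx b)" using hb unfolding h3_def HS_def by (auto split: if_splits)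
      have pb: "pS (dx b) \<le> pS (dx e)" using rr True cb unfolding LS_iff ltS_def by auto
      have "cS z" "pS z < pS (dx b)" using z(1) cb unfolding LS_iff ltS_def by auto
      then have "f z \<le> f (dx e)" using pb True f_valS[of z] f_valS[of "dx e"] unfolding vb_def by auto
      moreover have "z \<in> fst A" using z(1) st by auto
      ultimately have "z \<in> T" unfolding T_def by auto
      then have "z \<le> Max T" using finT(1) by simp
      moreover have "f (dx b) \<le> f (dx e)" using pb True cb f_valS[of "dx b"] f_valS[of "dx e"] unfolding vb_def by auto
      moreover have "dx b \<in> fst A" using yx st by auto
      ultimately show ?thesis using z(2) unfolding T_def by auto
    next
      case False
      then have cb: "\<not> cS (dx b)" and pb: "pS (dx b) = pS (dx e)" using hb unfolding h3_def HS_def by (auto split: if_splits)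
      have "f (dx b) = f (dx e)" using pb False cb f_valS[of "dx b"] f_valS[of "dx e"] by simp
      moreover have "dx b \<in> fst A" using yx st by auto
      ultimately have eqx: "dx b = dx e" using f_injS exS by blast
      have "(dy e, dy b) \<in> snd A" using rr eqx unfolding LS_iff ltS_def by auto
      moreover have "\<not> cS (dy b)" using yx eqx False unfolding LS_iff ltS_def by auto
      moreover have "\<not> cS (dy e)" using yxe False unfolding LS_iff ltS_def by auto
      ultimately have "pS (dy b) < pS (dy e)" "\<not> cS (dy b)" "\<not> cS (dy e)" unfolding LS_iff ltS_def by auto
      then have "f (dy b) \<le> f (dy e)" using f_valS[of "dy b"] f_valS[of "dy e"] unfolding vb_def by auto
      moreover have "dy b \<in> fst A" using yx st by auto
      ultimately show ?thesis using eqx exS unfolding T_def T'_def by auto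
    qed
    then show "b \<in> (\<lambda>(p, q). prod_encode (p, q)) ` (({..Max T} \<union> T') \<times> T)"
      using enc_d[of b] by force
  qed
  then show "finite {b \<in> PhiD A. h3 b = h3 e \<and> (b, e) \<in> (PhiR A)\<inverse>}"
    using finT finite_subset by blast
qed

end

lemma iso_sym: "iso A B \<Longrightarrow> iso B A"
proof -
  assume "iso A B"
  then obtain f where f: "bij_betw f (fst A) (fst B)"
    and o: "\<forall>x\<in>fst A. \<forall>y\<in>fst A. (x, y) \<in> snd A \<longleftrightarrow> (f x, f y) \<in> snd B"
    unfolding iso_def by blast
  let ?g = "inv_into (fst A) f"
  have g: "bij_betw ?g (fst B) (fst A)" using f by (rule bij_betw_inv_into)
  have "\<forall>x\<in>fst B. \<forall>y\<in>fst B. (x, y) \<in> snd B \<longleftrightarrow> (?g x, ?g y) \<in> snd A"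
  proof (intro ballI)
    fix x y assume xy: "x \<in> fst B" "y \<in> fst B"
    then have "?g x \<in> fst A" "?g y \<in> fst A" "f (?g x) = x" "f (?g y) = y"
      using f by (auto simp: bij_betw_def inv_into_into f_inv_into_f)
    then show "(x, y) \<in> snd B \<longleftrightarrow> (?g x, ?g y) \<in> snd A" using o by metis
  qed
  then show "iso B A" unfolding iso_def using g by blast
qed

lemma iso_trans: "iso A B \<Longrightarrow> iso B K \<Longrightarrow> iso A K"
proof -
  assume "iso A B" "iso B K"
  then obtain f g where f: "bij_betw f (fst A) (fst B)"
    and o: "\<forall>x\<in>fst A. \<forall>y\<in>fst A. (x, y) \<in> snd A \<longleftrightarrow> (f x, f y) \<in> snd B"
    and g: "bij_betw g (fst B) (fst K)"
    and o2: "\<forall>x\<in>fst B. \<forall>y\<in>fst B. (x, y) \<in> snd B \<longleftrightarrow> (g x, g y) \<in> snd K"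
    unfolding iso_def by blast
  have "bij_betw (g \<circ> f) (fst A) (fst K)" using f g by (rule bij_betw_trans)
  moreover have "\<forall>x\<in>fst A. \<forall>y\<in>fst A. (x, y) \<in> snd A \<longleftrightarrow> ((g \<circ> f) x, (g \<circ> f) y) \<in> snd K"
  proof (intro ballI)
    fix x y assume "x \<in> fst A" "y \<in> fst A"
    moreover have "f x \<in> fst B" "f y \<in> fst B" using f calculation by (auto simp: bij_betw_apply)
    ultimately show "(x, y) \<in> snd A \<longleftrightarrow> ((g \<circ> f) x, (g \<circ> f) y) \<in> snd K" using o o2 by simp
  qed
  ultimately show "iso A K" unfolding iso_def by blast
qed

definition has_least :: "struc \<Rightarrow> bool" where
  "has_least L \<longleftrightarrow> (\<exists>a\<in>fst L. \<forall>b\<in>fst L. b \<noteq> a \<longrightarrow> (a, b) \<in> snd L)"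

lemma iso_least: "iso A B \<Longrightarrow> has_least A \<Longrightarrow> has_least B"
proof -
  assume "iso A B" "has_least A"
  then obtain f where f: "bij_betw f (fst A) (fst B)"
    and o: "\<forall>x\<in>fst A. \<forall>y\<in>fst A. (x, y) \<in> snd A \<longleftrightarrow> (f x, f y) \<in> snd B"
    unfolding iso_def by blast
  obtain a where a: "a \<in> fst A" "\<forall>b\<in>fst A. b \<noteq> a \<longrightarrow> (a, b) \<in> snd A"
    using \<open>has_least A\<close> unfolding has_least_def by blast
  have "\<forall>b'\<in>fst B. b' \<noteq> f a \<longrightarrow> (f a, b') \<in> snd B"
  proof (intro ballI impI)
    fix b' assume b': "b' \<in> fst B" "b' \<noteq> f a"
    then obtain b where b: "b \<in> fst A" "b' = f b" using f by (auto simp: bij_betw_def)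
    then show "(f a, b') \<in> snd B" using a o b' by auto
  qed
  moreover have "f a \<in> fst B" using f a by (auto simp: bij_betw_def)
  ultimately show "has_least B" unfolding has_least_def by blast
qed

lemma least_w2: "has_least omega_times_2"
proof -
  have "(0, b) \<in> snd omega_times_2" if "b \<noteq> 0" for b :: nat
  proof (cases "even b")
    case True
    then obtain k where "b = 2 * k" by (rule evenE)
    then show ?thesis using that unfolding omega_times_2_def by simp
  next
    case False
    then show ?thesis unfolding omega_times_2_def by (simp add: odd_iff_mod_2_eq_one)
  qed
  moreover have "fst omega_times_2 = UNIV" by (simp add: omega_times_2_def)
  ultimately show ?thesis unfolding has_least_def by blast
qed

lemma nleast_w2s: "\<not> has_least omega_star_times_2"
  unfolding has_least_def omega_star_times_2_def by (auto intro!: exI[of _ "a + 2" for a])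

lemma pe00: "prod_encode (0, 0) = 0" by (simp add: prod_encode_def)

lemma least_sq: "has_least omega_squared"
proof -
  have d0: "prod_decode 0 = (0, 0)" using prod_encode_inverse[of "(0, 0)"] pe00 by simp
  have "(0, b) \<in> snd omega_squared" if "b \<noteq> 0" for b :: nat
  proof -
    have "prod_decode b \<noteq> (0, 0)"
    proof
      assume "prod_decode b = (0, 0)"
      then have "prod_encode (prod_decode b) = 0" using pe00 by simp
      then show False using that by simp
    qed
    then show ?thesis unfolding omega_squared_def using d0 by (cases "prod_decode b") auto
  qed
  moreover have "fst omega_squared = UNIV" by (simp add: omega_squared_def)
  ultimately show ?thesis unfolding has_least_def by blast
qed

lemma nleast_rsq: "\<not> has_least (rev_order omega_squared)"
proof
  assume "has_least (rev_order omega_squared)"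
  then obtain a where a: "\<forall>b. b \<noteq> a \<longrightarrow> (b, a) \<in> snd omega_squared"
    unfolding has_least_def rev_order_def by (auto simp: omega_squared_def)
  define b where "b = prod_encode (Suc (fst (prod_decode a)), 0)"
  have fb: "fst (prod_decode b) = Suc (fst (prod_decode a))" unfolding b_def by simp
  then have "b \<noteq> a" by auto
  then have "(b, a) \<in> snd omega_squared" using a by blast
  then show False using fb unfolding omega_squared_def by auto
qed

lemma not_iso_w: "\<not> iso omega_times_2 omega_star_times_2"
  using iso_least least_w2 nleast_w2s by blast

lemma not_iso_sq: "\<not> iso omega_squared (rev_order omega_squared)"
  using iso_least least_sq nleast_rsq by blast

lemma diag_inj: "is_structure B \<Longrightarrow> is_structure K \<Longrightarrow> diag B = diag K \<Longrightarrow> B = K"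
proof -
  assume sB: "is_structure B" and sC: "is_structure K" and d: "diag B = diag K"
  have "fst B = fst K"
  proof -
    have "a \<in> fst B \<longleftrightarrow> Pos (Eq a a) \<in> diag B" for a by (simp add: diag_def)
    moreover have "a \<in> fst K \<longleftrightarrow> Pos (Eq a a) \<in> diag K" for a by (simp add: diag_def)
    ultimately show ?thesis using d by blast
  qed
  moreover have "snd B = snd K"
  proof -
    have "p \<in> snd B \<longleftrightarrow> Pos (Lt (fst p) (snd p)) \<in> diag B" for p using sB by (auto simp: diag_def is_structure_def)
    moreover have "p \<in> snd K \<longleftrightarrow> Pos (Lt (fst p) (snd p)) \<in> diag K" for p using sC by (auto simp: diag_def is_structure_def)
    ultimately show ?thesis using d by blast
  qed
  ultimately show "B = K" by (simp add: prod_eq_iff)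
qed

lemma K0_cases:
  assumes "A \<in> class2 omega_times_2 omega_star_times_2"
  shows "(slo A \<and> iso A omega_times_2 \<and> iso (Phi A) omega_squared) \<or>
         (slo A \<and> iso A omega_star_times_2 \<and> iso (Phi A) (rev_order omega_squared))"
proof -
  have st: "snd A \<subseteq> fst A \<times> fst A" and i: "iso A omega_times_2 \<or> iso A omega_star_times_2"
    using assms unfolding class2_def is_structure_def by auto
  from i show ?thesis
  proof
    assume i1: "iso A omega_times_2"
    then obtain f where f: "bij_betw f (fst A) UNIV"
      and o: "\<forall>x\<in>fst A. \<forall>y\<in>fst A. (x, y) \<in> snd A \<longleftrightarrow> (f x, f y) \<in> snd omega_times_2"
      unfolding iso_def omega_times_2_def by auto
    have "slo A" using slo_A[OF st f] o by blast
    moreover have "iso (Phi A) omega_squared" using Phi_w2[OF st f] o by blast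
    ultimately show ?thesis using i1 by blast
  next
    assume i1: "iso A omega_star_times_2"
    then obtain f where f: "bij_betw f (fst A) UNIV"
      and o: "\<forall>x\<in>fst A. \<forall>y\<in>fst A. (x, y) \<in> snd A \<longleftrightarrow> (f x, f y) \<in> snd omega_star_times_2"
      unfolding iso_def omega_star_times_2_def by auto
    have "slo A" using slo_AS[OF st f] o by blast
    moreover have "iso (Phi A) (rev_order omega_squared)" using Phi_w2s[OF st f] o by blast
    ultimately show ?thesis using i1 by blast
  qed
qed

theorem theorem3p2:
  shows "class2 omega_times_2 omega_star_times_2 \<le>\<^sub>c class2 omega_squared (rev_order omega_squared)"
  unfolding c_leq_def computable_embedding_def
proof (intro exI[of _ Wset] conjI ballI allI impI)
  show "ce Wset" by (rule ce_Wset)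
next
  fix A assume A: "A \<in> class2 omega_times_2 omega_star_times_2"
  from K0_cases[OF A] have "slo A" by blast
  then have "enum_apply Wset (diag A) = diag (Phi A)" by (rule enum_Phi)
  moreover have "Phi A \<in> class2 omega_squared (rev_order omega_squared)"
    using K0_cases[OF A] Phi_structure unfolding class2_def by blast
  ultimately show "\<exists>B\<in>class2 omega_squared (rev_order omega_squared). enum_apply Wset (diag A) = diag B"
    by blast
next
  fix A A' B B'
  assume A: "A \<in> class2 omega_times_2 omega_star_times_2" and A': "A' \<in> class2 omega_times_2 omega_star_times_2"
    and sB: "is_structure B" and sB': "is_structure B'"
    and eB: "enum_apply Wset (diag A) = diag B" and eB': "enum_apply Wset (diag A') = diag B'"
  have slA: "slo A" using K0_cases[OF A] by blast
  have slA': "slo A'" using K0_cases[OF A'] by blast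
  have "diag B = diag (Phi A)" using eB enum_Phi[OF slA] by simp
  then have BA: "B = Phi A" using diag_inj[OF sB Phi_structure] by blast
  have "diag B' = diag (Phi A')" using eB' enum_Phi[OF slA'] by simp
  then have BA': "B' = Phi A'" using diag_inj[OF sB' Phi_structure] by blast
  have c1: "(iso A omega_times_2 \<and> iso (Phi A) omega_squared) \<or>
         (iso A omega_star_times_2 \<and> iso (Phi A) (rev_order omega_squared))"
    using K0_cases[OF A] by blast
  have c2: "(iso A' omega_times_2 \<and> iso (Phi A') omega_squared) \<or>
         (iso A' omega_star_times_2 \<and> iso (Phi A') (rev_order omega_squared))"
    using K0_cases[OF A'] by blast
  have same: "iso X Y" if "iso X L" "iso Y L" for X Y L
    using iso_trans[OF that(1) iso_sym[OF that(2)]] .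
  have diff: "\<not> iso X Y" if "iso X L" "iso Y M" "\<not> iso L M" for X Y L M
  proof
    assume xy: "iso X Y"
    have "iso L M" by (rule iso_trans[OF iso_trans[OF iso_sym[OF that(1)] xy] that(2)])
    then show False using that(3) by blast
  qed
  have nw': "\<not> iso omega_star_times_2 omega_times_2" using not_iso_w iso_sym by blast
  have nsq': "\<not> iso (rev_order omega_squared) omega_squared" using not_iso_sq iso_sym by blast
  have k1: "iso (Phi A) omega_squared" if a: "iso A omega_times_2"
  proof -
    have "\<not> iso A omega_star_times_2"
    proof
      assume "iso A omega_star_times_2"
      then have "iso omega_times_2 omega_star_times_2" by (rule iso_trans[OF iso_sym[OF a]])
      then show False using not_iso_w by blast
    qed
    then show ?thesis using c1 by blast
  qed
  have k2: "iso A omega_star_times_2 \<and> iso (Phi A) (rev_order omega_squared)" if "\<not> iso A omega_times_2"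
    using c1 that by blast
  have k1': "iso (Phi A') omega_squared" if a: "iso A' omega_times_2"
  proof -
    have "\<not> iso A' omega_star_times_2"
    proof
      assume "iso A' omega_star_times_2"
      then have "iso omega_times_2 omega_star_times_2" by (rule iso_trans[OF iso_sym[OF a]])
      then show False using not_iso_w by blast
    qed
    then show ?thesis using c2 by blast
  qed
  have k2': "iso A' omega_star_times_2 \<and> iso (Phi A') (rev_order omega_squared)" if "\<not> iso A' omega_times_2"
    using c2 that by blast
  show "iso A A' \<longleftrightarrow> iso B B'"
    unfolding BA BA'
  proof (cases "iso A omega_times_2"; cases "iso A' omega_times_2")
    assume a: "iso A omega_times_2" and a': "iso A' omega_times_2"
    show "iso A A' \<longleftrightarrow> iso (Phi A) (Phi A')"
      using same[OF a a'] same[OF k1[OF a] k1'[OF a']] by blast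
  next
    assume a: "iso A omega_times_2" and a': "\<not> iso A' omega_times_2"
    show "iso A A' \<longleftrightarrow> iso (Phi A) (Phi A')"
      using diff[OF a conjunct1[OF k2'[OF a']] not_iso_w] diff[OF k1[OF a] conjunct2[OF k2'[OF a']] not_iso_sq] by blast
  next
    assume a: "\<not> iso A omega_times_2" and a': "iso A' omega_times_2"
    show "iso A A' \<longleftrightarrow> iso (Phi A) (Phi A')"
      using diff[OF conjunct1[OF k2[OF a]] a' nw'] diff[OF conjunct2[OF k2[OF a]] k1'[OF a'] nsq'] by blast
  next
    assume a: "\<not> iso A omega_times_2" and a': "\<not> iso A' omega_times_2"
    show "iso A A' \<longleftrightarrow> iso (Phi A) (Phi A')"
      using same[OF conjunct1[OF k2[OF a]] conjunct1[OF k2'[OF a']]] same[OF conjunct2[OF k2[OF a]] conjunct2[OF k2'[OF a']]] by blast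
  qed
qed

end
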